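(* Let $S$ be a finite set, $N\ge1$, $\mathcal X=S^N$, $\mu$ the uniform measure on $\mathcal X$, and let $P$ be a coordinate-replacement kernel on $\mathcal X$ (defined in the context) which is reversible with respect to $\mu$. Let $\Omega\subseteq\mathcal X$ with $\mu(\Omega)>0$ be invariant under $P$, let $\pi=\mu(\cdot\mid\Omega)$, and let $G\subseteq\Omega$ with $\pi(G)>0$. Let $(X_t)_{t\ge0}$ denote the discrete-time chain with kernel $P$ and $\mathbb P_x$ its law started at $x$. Suppose: (i) there is $A<\infty$ such that every nonnegative $F:\mathcal X\to\mathbb R$ with $\operatorname{supp}(F)\subseteq G$ satisfies $\operatorname{Ent}_\mu(F^2)\le A\,\mathcal E_P^\mu(F,F)$; (ii) there are $t_*\ge0$, an integer $L\ge1$ and $\eta\ge0$ such that, uniformly in $x\in\Omega$ and all integers $s\ge t_*$, $\mathbb P_x(\exists\,u\in\{0,1,\dots,L\}:X_{s+u}\notin G)\le\eta$. Set $t_{\mathrm{conf}}=2A\log(e+\log|\Omega|)$, $\zeta=\mathbb P(\operatorname{Poi}(t_{\mathrm{conf}})>L)$ and $R=e^{-t_{\mathrm{conf}}/A}\log|\Omega|+A\,\pi(G^c)/\pi(G)$, where $G^c=\Omega\setminus G$. Then for every $x\in\Omega$ and every integer $s\ge t_*$, \[ \left\|\delta_xP^s e^{t_{\mathrm{conf}}(P-I)}-\pi\right\|_{\mathrm{TV}}\le 2(\eta+\zeta)+\sqrt{R/2}+\pi(G^c). \] Consequently, if $2(\eta+\zeta)+\sqrt{R/2}+\pi(G^c)+\mathbb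 P(\operatorname{Poi}(2t_* )<t_* )\le\frac14$, then the continuous-time chain satisfies $t^{\mathrm{cont}}_{\mathrm{mix}}(1/4)\le 2t_*+t_{\mathrm{conf}}$.
   Context: For $x\in S^N$, $i\in[N]$, $u\in S$, $x^{i,u}$ denotes $x$ with coordinate $i$ replaced by $u$, and $x_{-i}=(x_1,\dots,x_{i-1},x_{i+1},\dots,x_N)$. A coordinate-replacement kernel is a Markov kernel of the form $Pf(x)=\frac1N\sum_{i=1}^N\sum_{u\in S}K_i(x_{-i};x_i,u)f(x^{i,u})$, where for every $i$ and $x_{-i}$, $K_i(x_{-i})$ is a Markov kernel on $S$ reversible with respect to the uniform measure on $S$. $\Omega$ invariant means $P(x,y)=0$ for $x\in\Omega$, $y\notin\Omega$; then $P$ restricted to $\Omega$ is reversible w.r.t. $\pi$. $\operatorname{Ent}_\rho(f^2)=\rho(f^2\log f^2)-\rho(f^2)\log\rho(f^2)$ and $\mathcal E^\rho_K(f,f)=\frac12\sum_{x,y}\rho(x)K(x,y)(f(x)-f(y))^2$. $\operatorname{Poi}(t)$ is a Poisson variable of mean $t$. $e^{t(P-I)}$ is the continuous-time semigroup on $\Omega$, and $t^{\mathrm{cont}}_{\mathrm{mix}}(1/4)=\inf\{t\ge0:\max_{x\in\Omega}\|\delta_xe^{t(P-I)}-\pi\|_{\mathrm{TV}}\le1/4\}$. *)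

theory Defs
  imports "HOL-Analysis.Analysis"
begin

text \<open>Configurations: x :: 'n \<Rightarrow> 'a, with S = UNIV::'a (finite) and N = CARD('n).
  Kernels on a finite type are functions 'x \<Rightarrow> 'x \<Rightarrow> real.\<close>

definition cr_kernel :: "('n::finite \<Rightarrow> ('n \<Rightarrow> 'a::finite) \<Rightarrow> 'a \<Rightarrow> 'a \<Rightarrow> real)
    \<Rightarrow> ('n \<Rightarrow> 'a) \<Rightarrow> ('n \<Rightarrow> 'a) \<Rightarrow> real" where
  "cr_kernel K x y = (1 / real CARD('n)) *
     (\<Sum>i\<in>UNIV. \<Sum>u\<in>UNIV. K i x (x i) u * (if y = x(i := u) then 1 else 0))"

text \<open>K i x depends only on x_{-i}; each K i x is a Markov kernel on S reversible
  w.r.t. the uniform measure (i.e. symmetric).\<close>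
definition cr_data :: "('n::finite \<Rightarrow> ('n \<Rightarrow> 'a::finite) \<Rightarrow> 'a \<Rightarrow> 'a \<Rightarrow> real) \<Rightarrow> bool" where
  "cr_data K \<longleftrightarrow>
     (\<forall>i x v. K i (x(i := v)) = K i x) \<and>
     (\<forall>i x a b. K i x a b \<ge> 0) \<and>
     (\<forall>i x a. (\<Sum>b\<in>UNIV. K i x a b) = 1) \<and>
     (\<forall>i x a b. K i x a b = K i x b a)"

fun mpow :: "('x::finite \<Rightarrow> 'x \<Rightarrow> real) \<Rightarrow> nat \<Rightarrow> 'x \<Rightarrow> 'x \<Rightarrow> real" where
  "mpow P 0 x y = (if x = y then 1 else 0)"
| "mpow P (Suc n) x y = (\<Sum>z\<in>UNIV. mpow P n x z * P z y)"

text \<open>Continuous-time semigroup e^{t(P-I)} = \<Sum>_k e^{-t} t^k/k! P^k.\<close>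
definition heat :: "('x::finite \<Rightarrow> 'x \<Rightarrow> real) \<Rightarrow> real \<Rightarrow> 'x \<Rightarrow> 'x \<Rightarrow> real" where
  "heat P t x y = (\<Sum>k. exp (- t) * t ^ k / fact k * mpow P k x y)"

text \<open>Probability, for the chain started at y, that X_0,...,X_n all lie in G.\<close>
fun stay_in :: "('x::finite \<Rightarrow> 'x \<Rightarrow> real) \<Rightarrow> 'x set \<Rightarrow> nat \<Rightarrow> 'x \<Rightarrow> real" where
  "stay_in P G 0 y = (if y \<in> G then 1 else 0)"
| "stay_in P G (Suc n) y = (if y \<in> G then (\<Sum>z\<in>UNIV. P y z * stay_in P G n z) else 0)"

text \<open>P_x(\<exists>u\<in>{0..L}. X_{s+u} \<notin> G).\<close>
definition exit_prob :: "('x::finite \<Rightarrow> 'x \<Rightarrow> real) \<Rightarrow> 'x set \<Rightarrow> 'x \<Rightarrow> nat \<Rightarrow> nat \<Rightarrow> real" where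
  "exit_prob P G x s L = 1 - (\<Sum>y\<in>UNIV. mpow P s x y * stay_in P G L y)"

definition unif_mean :: "('x::finite \<Rightarrow> real) \<Rightarrow> real" where
  "unif_mean f = (\<Sum>x\<in>UNIV. f x) / real CARD('x)"

definition Ent_unif :: "('x::finite \<Rightarrow> real) \<Rightarrow> real" where
  "Ent_unif g = unif_mean (\<lambda>x. g x * ln (g x)) - unif_mean g * ln (unif_mean g)"

definition dirichlet_unif :: "('x::finite \<Rightarrow> 'x \<Rightarrow> real) \<Rightarrow> ('x \<Rightarrow> real) \<Rightarrow> real" where
  "dirichlet_unif P f = (1/2) * (\<Sum>x\<in>UNIV. \<Sum>y\<in>UNIV. (1 / real CARD('x)) * P x y * (f x - f y)^2)"

definition cond_unif :: "'x set \<Rightarrow> 'x \<Rightarrow> real" where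
  "cond_unif \<Omega> y = (if y \<in> \<Omega> then 1 / real (card \<Omega>) else 0)"

definition tv_dist :: "('x::finite \<Rightarrow> real) \<Rightarrow> ('x \<Rightarrow> real) \<Rightarrow> real" where
  "tv_dist \<nu> \<rho> = (1/2) * (\<Sum>y\<in>UNIV. \<bar>\<nu> y - \<rho> y\<bar>)"

definition poi_pmf :: "real \<Rightarrow> nat \<Rightarrow> real" where
  "poi_pmf t k = exp (- t) * t ^ k / fact k"

definition poi_gt :: "real \<Rightarrow> nat \<Rightarrow> real" where
  "poi_gt t L = (\<Sum>k. if k > L then poi_pmf t k else 0)"

definition poi_lt :: "real \<Rightarrow> real \<Rightarrow> real" where
  "poi_lt t c = (\<Sum>k. if real k < c then poi_pmf t k else 0)"

definition tmix_cont :: "('x::finite \<Rightarrow> 'x \<Rightarrow> real) \<Rightarrow> 'x set \<Rightarrow> real" where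
  "tmix_cont P \<Omega> = Inf {t. t \<ge> 0 \<and> (\<forall>x\<in>\<Omega>. tv_dist (heat P t x) (cond_unif \<Omega>) \<le> 1/4)}"

end

theory Submission
  imports Defs
begin

lemma mpow_0_right: "(\<Sum>z\<in>UNIV. f z * (if z = y then 1 else 0)) = (f y :: real)"
  for f :: "'x::finite \<Rightarrow> real"
proof -
  have "(\<Sum>z\<in>UNIV. f z * (if z = y then 1 else 0)) = (\<Sum>z\<in>UNIV. if z = y then f z else 0)"
    by (rule sum.cong) auto
  then show ?thesis by simp
qed

lemma mpow_1: "mpow P (Suc 0) x y = P x y"
proof -
  have "mpow P (Suc 0) x y = (\<Sum>z\<in>UNIV. (if x = z then 1 else 0) * P z y)" by simp
  also have "\<dots> = (\<Sum>z\<in>UNIV. if x = z then P z y else 0)"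
    by (rule sum.cong) auto
  then show ?thesis by simp
qed

lemma mpow_add: "mpow P (j + k) x y = (\<Sum>z\<in>UNIV. mpow P j x z * mpow P k z y)"
proof (induction k arbitrary: y)
  case 0
  then show ?case by (simp add: mpow_0_right)
next
  case (Suc k)
  have "mpow P (j + Suc k) x y = (\<Sum>w\<in>UNIV. mpow P (j+k) x w * P w y)" by simp
  also have "\<dots> = (\<Sum>w\<in>UNIV. (\<Sum>z\<in>UNIV. mpow P j x z * mpow P k z w) * P w y)"
    using Suc.IH by simp
  also have "\<dots> = (\<Sum>w\<in>UNIV. \<Sum>z\<in>UNIV. mpow P j x z * (mpow P k z w * P w y))"
    by (simp add: sum_distrib_right mult.assoc)
  also have "\<dots> = (\<Sum>z\<in>UNIV. \<Sum>w\<in>UNIV. mpow P j x z * (mpow P k z w * P w y))"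
    by (rule sum.swap)
  also have "\<dots> = (\<Sum>z\<in>UNIV. mpow P j x z * mpow P (Suc k) z y)"
    by (simp add: sum_distrib_left)
  finally show ?case .
qed

lemma mpow_Suc_left: "mpow P (Suc n) x y = (\<Sum>z\<in>UNIV. P x z * mpow P n z y)"
proof -
  have "mpow P (Suc n) x y = mpow P (Suc 0 + n) x y" by simp
  also have "\<dots> = (\<Sum>z\<in>UNIV. mpow P (Suc 0) x z * mpow P n z y)" by (rule mpow_add)
  finally show ?thesis by (simp only: mpow_1)
qed

locale substoch =
  fixes P :: "'x::finite \<Rightarrow> 'x \<Rightarrow> real"
  assumes nn: "\<And>x y. 0 \<le> P x y" and rs: "\<And>x. (\<Sum>y\<in>UNIV. P x y) \<le> 1"
begin

lemma mpow_nn: "0 \<le> mpow P n x y"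
  by (induction n arbitrary: y) (auto intro!: sum_nonneg simp: nn)

lemma mpow_rs: "(\<Sum>y\<in>UNIV. mpow P n x y) \<le> 1"
proof (induction n)
  case 0
  then show ?case by (simp add: sum.delta)
next
  case (Suc n)
  have "(\<Sum>y\<in>UNIV. mpow P (Suc n) x y) = (\<Sum>z\<in>UNIV. mpow P n x z * (\<Sum>y\<in>UNIV. P z y))"
    by (simp add: sum_distrib_left sum_distrib_right mult.assoc) (rule sum.swap)
  also have "\<dots> \<le> (\<Sum>z\<in>UNIV. mpow P n x z)"
    by (intro sum_mono) (simp add: mpow_nn rs mult_left_le)
  finally show ?case using Suc by simp
qed

lemma mpow_le1: "mpow P n x y \<le> 1"
proof -
  have "mpow P n x y \<le> (\<Sum>y\<in>UNIV. mpow P n x y)"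
    by (rule member_le_sum) (auto simp: mpow_nn)
  then show ?thesis using mpow_rs[of n x] by simp
qed

end

locale stoch =
  fixes P :: "'x::finite \<Rightarrow> 'x \<Rightarrow> real"
  assumes nn: "\<And>x y. 0 \<le> P x y" and rs1: "\<And>x. (\<Sum>y\<in>UNIV. P x y) = 1"
begin

sublocale substoch
  by unfold_locales (auto simp: nn rs1)

lemma mpow_rs1: "(\<Sum>y\<in>UNIV. mpow P n x y) = 1"
proof (induction n)
  case 0
  then show ?case by (simp add: sum.delta)
next
  case (Suc n)
  have "(\<Sum>y\<in>UNIV. mpow P (Suc n) x y) = (\<Sum>z\<in>UNIV. mpow P n x z * (\<Sum>y\<in>UNIV. P z y))"
    by (simp add: sum_distrib_left sum_distrib_right mult.assoc) (rule sum.swap)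
  then show ?case using Suc by (simp add: rs1)
qed

end

lemma poi_nn: "0 \<le> t \<Longrightarrow> 0 \<le> poi_pmf t k"
  by (simp add: poi_pmf_def)

lemma poi_sums: "(\<lambda>k. poi_pmf t k) sums 1"
proof -
  have "(\<lambda>n. exp (-t) * (t^n /\<^sub>R fact n)) sums (exp (-t) * exp t)"
    by (rule sums_mult[OF exp_converges])
  moreover have "exp (-t) * exp t = 1" by (simp add: exp_minus field_simps)
  moreover have "(\<lambda>n. exp (-t) * (t^n /\<^sub>R fact n)) = (\<lambda>k. poi_pmf t k)"
    by (auto simp: poi_pmf_def divide_inverse mult.commute)
  ultimately show ?thesis by simp
qed

lemma poi_summable: "summable (\<lambda>k. poi_pmf t k)"
  using poi_sums by (rule sums_summable)

lemma poi_suminf: "(\<Sum>k. poi_pmf t k) = 1"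
  using poi_sums by (rule sums_unique[symmetric])

lemma poi_summable_bdd:
  assumes t: "0 \<le> t" and c: "\<And>k. \<bar>c k\<bar> \<le> C"
  shows "summable (\<lambda>k. poi_pmf t k * c k)"
proof (rule summable_comparison_test)
  show "\<exists>N. \<forall>n\<ge>N. norm (poi_pmf t n * c n) \<le> poi_pmf t n * C"
    using c poi_nn[OF t] by (auto simp: abs_mult intro!: mult_left_mono)
  show "summable (\<lambda>n. poi_pmf t n * C)"
    by (rule summable_mult2[OF poi_summable])
qed

lemma heat_eq: "heat P t x y = (\<Sum>k. poi_pmf t k * mpow P k x y)"
  by (simp add: heat_def poi_pmf_def)

context substoch begin

lemma heat_summ: "0 \<le> t \<Longrightarrow> summable (\<lambda>k. poi_pmf t k * mpow P k x y)"
  by (rule poi_summable_bdd[where C=1]) (auto simp: mpow_nn mpow_le1)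

lemma heat_nn: "0 \<le> t \<Longrightarrow> 0 \<le> heat P t x y"
  unfolding heat_eq by (intro suminf_nonneg heat_summ) (auto simp: poi_nn mpow_nn)

end

context stoch begin

lemma heat_rows: assumes "0 \<le> t" shows "(\<Sum>y\<in>UNIV. heat P t x y) = 1"
proof -
  have "(\<Sum>y\<in>UNIV. heat P t x y) = (\<Sum>k. \<Sum>y\<in>UNIV. poi_pmf t k * mpow P k x y)"
    unfolding heat_eq by (rule suminf_sum[symmetric]) (rule heat_summ[OF assms])
  also have "\<dots> = (\<Sum>k. poi_pmf t k)"
    by (simp add: sum_distrib_left[symmetric] mpow_rs1)
  finally show ?thesis by (simp add: poi_suminf)
qed

lemma poi_conv: "(\<Sum>i\<le>n. poi_pmf a i * poi_pmf b (n - i)) = poi_pmf (a + b) n"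
proof -
  have "(\<Sum>i\<le>n. poi_pmf a i * poi_pmf b (n - i))
      = (\<Sum>i\<le>n. exp (-(a+b)) / fact n * (of_nat (n choose i) * a ^ i * b ^ (n - i)))"
    by (intro sum.cong refl) (simp add: poi_pmf_def binomial_fact exp_add[symmetric] field_simps)
  also have "\<dots> = exp (-(a+b)) / fact n * (a + b) ^ n"
    by (simp add: binomial_ring sum_distrib_left)
  finally show ?thesis by (simp add: poi_pmf_def)
qed

lemma heat_semigroup:
  assumes a: "0 \<le> a" and b: "0 \<le> b"
  shows "heat P (a + b) x y = (\<Sum>z\<in>UNIV. heat P a x z * heat P b z y)"
proof -
  have "(\<Sum>z\<in>UNIV. heat P a x z * heat P b z y)
     = (\<Sum>z\<in>UNIV. \<Sum>n. \<Sum>i\<le>n. (poi_pmf a i * mpow P i x z) * (poi_pmf b (n - i) * mpow P (n - i) z y))"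
  proof (intro sum.cong refl)
    fix z
    show "heat P a x z * heat P b z y =
       (\<Sum>n. \<Sum>i\<le>n. (poi_pmf a i * mpow P i x z) * (poi_pmf b (n - i) * mpow P (n - i) z y))"
      unfolding heat_eq
      by (rule Cauchy_product)
        (auto simp: abs_mult poi_nn a b mpow_nn intro!: heat_summ a b)
  qed
  also have "\<dots> = (\<Sum>n. \<Sum>z\<in>UNIV. \<Sum>i\<le>n. (poi_pmf a i * mpow P i x z) * (poi_pmf b (n - i) * mpow P (n - i) z y))"
  proof (rule suminf_sum[symmetric])
    fix z :: 'x
    show "summable (\<lambda>n. \<Sum>i\<le>n. (poi_pmf a i * mpow P i x z) * (poi_pmf b (n - i) * mpow P (n - i) z y))"
      by (rule summable_Cauchy_product)
        (auto simp: abs_mult poi_nn a b mpow_nn intro!: heat_summ a b)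
  qed
  also have "\<dots> = (\<Sum>n. poi_pmf (a + b) n * mpow P n x y)"
  proof (intro suminf_cong)
    fix n
    have "(\<Sum>z\<in>UNIV. \<Sum>i\<le>n. (poi_pmf a i * mpow P i x z) * (poi_pmf b (n - i) * mpow P (n - i) z y))
        = (\<Sum>i\<le>n. poi_pmf a i * poi_pmf b (n - i) * (\<Sum>z\<in>UNIV. mpow P i x z * mpow P (n - i) z y))"
      by (subst sum.swap) (simp add: sum_distrib_left mult_ac)
    also have "\<dots> = (\<Sum>i\<le>n. poi_pmf a i * poi_pmf b (n - i)) * mpow P n x y"
      by (simp add: mpow_add[symmetric] sum_distrib_right)
    finally show "(\<Sum>z\<in>UNIV. \<Sum>i\<le>n. (poi_pmf a i * mpow P i x z) * (poi_pmf b (n - i) * mpow P (n - i) z y))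
        = poi_pmf (a + b) n * mpow P n x y" by (simp add: poi_conv)
  qed
  finally show ?thesis by (simp add: heat_eq)
qed

end

lemma xlnx_right: "((\<lambda>x::real. x * ln x) \<longlongrightarrow> 0) (at_right 0)"
proof (rule Lim_null_comparison)
  show "\<forall>\<^sub>F x in at_right 0. norm (x * ln x) \<le> 2 * sqrt x"
    unfolding eventually_at_right_field
  proof (intro exI[of _ 1] conjI allI impI)
    fix x :: real assume x: "0 < x" "x < 1"
    have sx: "0 < sqrt x" using x by simp
    have "ln (1 / sqrt x) \<le> 1 / sqrt x - 1" using sx by (intro ln_le_minus_one) simp
    then have l: "- ln (sqrt x) \<le> 1 / sqrt x" using sx by (simp add: ln_div)
    have lnx: "ln x = 2 * ln (sqrt x)" using x by (simp add: ln_sqrt)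
    have neg: "ln x \<le> 0" using x by simp
    have "norm (x * ln x) = x * (- ln x)" using x neg by (simp add: abs_mult)
    also have "\<dots> = 2 * (sqrt x * sqrt x) * (- ln (sqrt x))" using x by (simp add: lnx)
    also have "\<dots> \<le> 2 * (sqrt x * sqrt x) * (1 / sqrt x)"
      using l sx by (intro mult_left_mono) auto
    also have "\<dots> = 2 * sqrt x" using sx by (simp add: field_simps)
    finally show "norm (x * ln x) \<le> 2 * sqrt x" .
  qed simp
  have "((\<lambda>x::real. 2 * sqrt x) \<longlongrightarrow> 2 * sqrt 0) (at_right 0)"
    by (intro tendsto_intros tendsto_ident_at)
  then show "((\<lambda>x::real. 2 * sqrt x) \<longlongrightarrow> 0) (at_right 0)" by simp
qed

lemma xlnx_at0: "((\<lambda>x::real. x * ln x) \<longlongrightarrow> 0) (at 0)"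
proof (rule filterlim_split_at)
  show "((\<lambda>x::real. x * ln x) \<longlongrightarrow> 0) (at_right 0)" by (rule xlnx_right)
  have "((\<lambda>x::real. - (x * ln x)) \<longlongrightarrow> - 0) (at_right 0)"
    by (rule tendsto_minus[OF xlnx_right])
  then have "((\<lambda>x::real. (- x) * ln (- x)) \<longlongrightarrow> 0) (at_right (- 0))"
    by (simp add: ln_minus)
  then show "((\<lambda>x::real. x * ln x) \<longlongrightarrow> 0) (at_left 0)"
    by (subst filterlim_at_left_to_right) simp
qed

lemma isCont_xlnx: "isCont (\<lambda>x::real. x * ln x) c"
proof (cases "c = 0")
  case True
  then show ?thesis using xlnx_at0 by (simp add: isCont_def)
next
  case False
  then show ?thesis by (intro continuous_intros) auto
qed

lemma tendsto_xlnx: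
  assumes "(f \<longlongrightarrow> c) F"
  shows "((\<lambda>x. f x * ln (f x)) \<longlongrightarrow> c * ln (c::real)) F"
  using isCont_tendsto_compose[OF isCont_xlnx assms] by simp

lemma ln_ge_1_minus_inv: "0 < x \<Longrightarrow> 1 - 1 / x \<le> ln (x::real)"
proof -
  assume x: "0 < x"
  have "ln (1/x) \<le> 1/x - 1" using x by (intro ln_le_minus_one) simp
  then show ?thesis using x by (simp add: ln_div)
qed

lemma g_one_minus_ln: "0 < g \<Longrightarrow> g * (1 - ln g) \<le> (1::real)"
proof -
  assume g: "0 < g"
  have "1 - 1/g \<le> ln g" by (rule ln_ge_1_minus_inv[OF g])
  then have "g * (1 - 1/g) \<le> g * ln g" using g by (intro mult_left_mono) auto
  then show ?thesis using g by (simp add: algebra_simps)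
qed

lemma uv_ln: 
  assumes u: "0 < u" and v: "0 < v" and uv: "v \<le> u"
  shows "(u - v)^2 / u \<le> (u - v) * (ln u - ln (v::real))"
proof -
  have "ln (v/u) \<le> v/u - 1" using u v by (intro ln_le_minus_one) simp
  then have "(u - v) / u \<le> ln u - ln v" using u v by (simp add: ln_div field_simps)
  then have "(u - v) * ((u - v) / u) \<le> (u - v) * (ln u - ln v)"
    using uv by (intro mult_left_mono) auto
  then show ?thesis by (simp add: power2_eq_square)
qed

lemma uv_ln2:
  assumes u: "0 < u" and v: "0 < v"
  shows "(u - v)^2 / (u + v) \<le> (u - v) * (ln u - ln (v::real))"
proof (cases "v \<le> u")
  case True
  have "(u - v)^2 / (u + v) \<le> (u - v)^2 / u"
    using u v by (intro divide_left_mono) auto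
  also have "\<dots> \<le> (u - v) * (ln u - ln v)" by (rule uv_ln[OF u v True])
  finally show ?thesis .
next
  case False
  have "(u - v)^2 / (u + v) = (v - u)^2 / (v + u)" by (simp add: power2_commute add.commute)
  also have "\<dots> \<le> (v - u)^2 / v"
    using u v by (intro divide_left_mono) auto
  also have "\<dots> \<le> (v - u) * (ln v - ln u)" using False by (intro uv_ln[OF v u]) auto
  also have "\<dots> = (u - v) * (ln u - ln v)" by (simp add: algebra_simps)
  finally show ?thesis .
qed

lemma sqrt_ent_ineq:
  assumes a: "0 < a" and b: "0 < b"
  shows "(sqrt a - sqrt b)^2 \<le> (a - b) * (ln a - ln (b::real))"
proof -
  define u v where "u = sqrt a" and "v = sqrt b"
  have u: "0 < u" and v: "0 < v" using a b by (auto simp: u_def v_def)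
  have au: "a = u^2" and bv: "b = v^2" using a b by (auto simp: u_def v_def)
  have lna: "ln a = 2 * ln u" and lnb: "ln b = 2 * ln v"
    using u v by (auto simp: au bv ln_realpow)
  have "(u - v)^2 / (u + v) \<le> (u - v) * (ln u - ln v)" by (rule uv_ln2[OF u v])
  then have "(u - v)^2 \<le> (u + v) * ((u - v) * (ln u - ln v))"
    using u v by (simp add: divide_le_eq mult.commute)
  moreover have "0 \<le> (u + v) * ((u - v) * (ln u - ln v))"
    using \<open>(u - v)^2 \<le> _\<close> by (meson order_trans zero_le_power2)
  ultimately have "(u - v)^2 \<le> 2 * ((u + v) * ((u - v) * (ln u - ln v)))" by linarith
  also have "\<dots> = (a - b) * (ln a - ln b)"
    unfolding lna lnb by (simp add: au bv power2_eq_square algebra_simps)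
  finally show ?thesis by (simp add: u_def v_def)
qed

lemma dg_lem: "0 < x \<Longrightarrow> DERIV (\<lambda>x::real. 4*x*ln x + 4*ln x - 8*x + 8) x :> 4 * (ln x + 1/x - 1)"
  apply (rule derivative_eq_intros refl | simp)+
  done

lemma dh_lem: "0 < x \<Longrightarrow> DERIV (\<lambda>x::real. (2 * x + 4) * (x * ln x - x + 1) - 3 * (x - 1)^2) x :>
   (2 * (x * ln x - x + 1) + (2 * x + 4) * (ln x + x * (1/x) - 1) - 3 * (2 * (x - 1)))"
  apply (rule derivative_eq_intros refl | simp)+
  done

lemma pinsker_scalar:
  assumes a: "0 \<le> a"
  shows "3 * (a - 1)^2 \<le> (2 * a + 4) * (a * ln a - a + (1::real))"
proof (cases "a = 0")
  case True
  then show ?thesis by simp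
next
  case False
  then have a0: "0 < a" using a by simp
  define g where "g = (\<lambda>x::real. 4*x*ln x + 4*ln x - 8*x + 8)"
  define h where "h = (\<lambda>x::real. (2 * x + 4) * (x * ln x - x + 1) - 3 * (x - 1)^2)"
  have dg: "DERIV g x :> 4 * (ln x + 1/x - 1)" if "0 < x" for x :: real
    unfolding g_def using dg_lem[OF that] .
  have dg_nn: "0 \<le> 4 * (ln x + 1/x - 1)" if "0 < x" for x :: real
    using ln_ge_1_minus_inv[OF that] by simp
  have dh: "DERIV h x :> g x" if "0 < x" for x :: real
  proof -
    have "DERIV h x :> (2 * (x * ln x - x + 1) + (2 * x + 4) * (ln x + x * (1/x) - 1) - 3 * (2 * (x - 1)))"
      unfolding h_def using dh_lem[OF that] .
    moreover have "(2 * (x * ln x - x + 1) + (2 * x + 4) * (ln x + x * (1/x) - 1) - 3 * (2 * (x - 1))) = g x"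
      using that by (simp add: g_def algebra_simps)
    ultimately show ?thesis by simp
  qed
  have g1: "g 1 = 0" and h1: "h 1 = 0" by (auto simp: g_def h_def)
  show ?thesis
  proof (cases "a \<le> 1")
    case True
    have gle: "g x \<le> 0" if "a \<le> x" "x \<le> 1" for x
    proof -
      have "g x \<le> g 1"
      proof (rule DERIV_nonneg_imp_nondecreasing[OF \<open>x \<le> 1\<close>])
        fix z assume "x \<le> z" "z \<le> 1"
        then have "0 < z" using that a0 by linarith
        then show "\<exists>y. DERIV g z :> y \<and> 0 \<le> y" using dg dg_nn by blast
      qed
      then show ?thesis using g1 by simp
    qed
    have "h 1 \<le> h a"
    proof (rule DERIV_nonpos_imp_nonincreasing[OF True])
      fix z assume z: "a \<le> z" "z \<le> 1"
      then have "0 < z" using a0 by linarith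
      then show "\<exists>y. DERIV h z :> y \<and> y \<le> 0" using dh gle z by blast
    qed
    then show ?thesis using h1 by (simp add: h_def)
  next
    case False
    have gge: "0 \<le> g x" if "1 \<le> x" for x
    proof -
      have "g 1 \<le> g x"
      proof (rule DERIV_nonneg_imp_nondecreasing[OF \<open>1 \<le> x\<close>])
        fix z assume "1 \<le> z" "z \<le> x"
        then have "0 < z" by linarith
        then show "\<exists>y. DERIV g z :> y \<and> 0 \<le> y" using dg dg_nn by blast
      qed
      then show ?thesis using g1 by simp
    qed
    have "h 1 \<le> h a"
    proof (rule DERIV_nonneg_imp_nondecreasing[of 1 a h])
      show "1 \<le> a" using False by simp
      fix z assume z: "1 \<le> z" "z \<le> a"
      then have "0 < z" by linarith
      then show "\<exists>y. DERIV h z :> y \<and> 0 \<le> y" using dh gge z by blast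
    qed
    then show ?thesis using h1 by (simp add: h_def)
  qed
qed
lemma aux3: "c \<noteq> 0 \<Longrightarrow> c / 3 * (3 * X / c) = (X::real)"
  by (simp add: field_simps)

lemma pinsker_unif:
  fixes p :: "'x \<Rightarrow> real"
  assumes G: "finite G" "G \<noteq> {}" and pnn: "\<And>y. y \<in> G \<Longrightarrow> 0 \<le> p y"
    and psum: "(\<Sum>y\<in>G. p y) = 1"
  shows "(\<Sum>y\<in>G. \<bar>p y - 1 / real (card G)\<bar>)^2 \<le> 2 * (\<Sum>y\<in>G. p y * ln (real (card G) * p y))"
proof -
  define n where "n = real (card G)"
  have n: "0 < n" using G by (simp add: n_def card_gt_0_iff)
  define a where "a y = n * p y" for y
  have ann: "0 \<le> a y" if "y \<in> G" for y using pnn[OF that] n by (simp add: a_def)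
  have suma: "(\<Sum>y\<in>G. a y) = n" by (simp add: a_def sum_distrib_left[symmetric] psum)
  define u where "u y = sqrt ((2 * a y + 4) / 3)" for y
  define w where "w y = sqrt (3 * (a y - 1)^2 / (2 * a y + 4))" for y
  have uw: "\<bar>a y - 1\<bar> = u y * w y" if "y \<in> G" for y
  proof -
    have "u y * w y = sqrt ((2 * a y + 4) / 3 * (3 * (a y - 1)^2 / (2 * a y + 4)))"
      unfolding u_def w_def by (rule real_sqrt_mult[symmetric])
    also have "\<dots> = sqrt ((a y - 1)^2)" using ann[OF that] aux3[of "2 * a y + 4" "(a y - 1)^2"] by simp
    finally show ?thesis by simp
  qed
  have "(\<Sum>y\<in>G. \<bar>a y - 1\<bar>)^2 = (\<Sum>y\<in>G. u y * w y)^2" using uw by simp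
  also have "\<dots> \<le> (\<Sum>y\<in>G. (u y)^2) * (\<Sum>y\<in>G. (w y)^2)" by (rule Cauchy_Schwarz_ineq_sum)
  also have "(\<Sum>y\<in>G. (u y)^2) = 2 * n"
  proof -
    have "(\<Sum>y\<in>G. (u y)^2) = (\<Sum>y\<in>G. (2 * a y + 4) / 3)"
      using ann by (intro sum.cong refl) (simp add: u_def)
    also have "\<dots> = (2 * (\<Sum>y\<in>G. a y) + 4 * n) / 3"
      by (simp add: sum_divide_distrib[symmetric] sum.distrib sum_distrib_left[symmetric] n_def)
    finally show ?thesis by (simp add: suma)
  qed
  also have "(\<Sum>y\<in>G. (w y)^2) \<le> (\<Sum>y\<in>G. a y * ln (a y) - a y + 1)"
  proof (rule sum_mono)
    fix y assume y: "y \<in> G"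
    have pos: "0 < 2 * a y + 4" using ann[OF y] by simp
    have "(w y)^2 = 3 * (a y - 1)^2 / (2 * a y + 4)"
      using ann[OF y] by (simp add: w_def)
    also have "\<dots> \<le> a y * ln (a y) - a y + 1"
      using pinsker_scalar[OF ann[OF y]] pos by (simp add: divide_le_eq mult.commute)
    finally show "(w y)^2 \<le> a y * ln (a y) - a y + 1" .
  qed
  also have "(\<Sum>y\<in>G. a y * ln (a y) - a y + 1) = (\<Sum>y\<in>G. a y * ln (a y))"
    by (simp add: sum.distrib sum_subtractf suma n_def)
  finally have cs: "(\<Sum>y\<in>G. \<bar>a y - 1\<bar>)^2 \<le> 2 * n * (\<Sum>y\<in>G. a y * ln (a y))"
    using n by (simp add: mult_left_mono)
  have l: "(\<Sum>y\<in>G. \<bar>p y - 1 / n\<bar>) = (\<Sum>y\<in>G. \<bar>a y - 1\<bar>) / n"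
    using n by (simp add: sum_divide_distrib a_def abs_div_pos[symmetric] field_simps)
  have r: "(\<Sum>y\<in>G. a y * ln (a y)) = n * (\<Sum>y\<in>G. p y * ln (n * p y))"
    by (simp add: a_def sum_distrib_left mult.assoc)
  have "(\<Sum>y\<in>G. \<bar>p y - 1 / n\<bar>)^2 = (\<Sum>y\<in>G. \<bar>a y - 1\<bar>)^2 / n^2"
    by (simp add: l power_divide)
  also have "\<dots> \<le> 2 * n * (n * (\<Sum>y\<in>G. p y * ln (n * p y))) / n^2"
    using cs r n by (intro divide_right_mono) auto
  also have "\<dots> = 2 * (\<Sum>y\<in>G. p y * ln (n * p y))" using n by (simp add: power2_eq_square)
  finally show ?thesis by (simp add: n_def)
qed

lemma sumG: "(\<Sum>x\<in>UNIV. if x \<in> G then f x else 0) = (\<Sum>x\<in>G. f x :: real)"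
  for f :: "'x::finite \<Rightarrow> real"
  by (simp add: sum.inter_restrict[symmetric])

lemma sum_split: "(\<Sum>x\<in>UNIV. f x) = (\<Sum>x\<in>G. f x) + (\<Sum>x\<in>-G. f x :: real)"
  for f :: "'x::finite \<Rightarrow> real"
  using sum.subset_diff[of G UNIV f] by (simp add: Compl_eq_Diff_UNIV add.commute)

locale setting = stoch P for P :: "'x::finite \<Rightarrow> 'x \<Rightarrow> real" +
  fixes \<Omega> G :: "'x set" and A :: real
  assumes sym: "\<And>x y. P x y = P y x"
    and inv: "\<And>x y. x \<in> \<Omega> \<Longrightarrow> y \<notin> \<Omega> \<Longrightarrow> P x y = 0"
    and GO: "G \<subseteq> \<Omega>" and Gne: "G \<noteq> {}" and Apos: "0 < A"
    and LS: "\<And>F. (\<forall>x. F x \<ge> 0) \<Longrightarrow> (\<forall>x. x \<notin> G \<longrightarrow> F x = 0) \<Longrightarrow>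
               Ent_unif (\<lambda>x. (F x)^2) \<le> A * dirichlet_unif P F"
begin

definition kk :: "'x \<Rightarrow> real" where "kk x = (\<Sum>y\<in>-G. P x y)"

definition Phi :: "('x \<Rightarrow> real) \<Rightarrow> real" where
  "Phi b = (\<Sum>y\<in>G. b y * ln (b y)) - (\<Sum>y\<in>G. b y) * ln (\<Sum>y\<in>G. b y)
     + (\<Sum>y\<in>G. b y) * ln (real (card G))"

definition rho :: real where "rho = real (card (\<Omega> - G)) / real (card G)"

lemma n_pos: "0 < real (card G)"
  using Gne by (simp add: card_gt_0_iff)

lemma rho_nn: "0 \<le> rho" by (simp add: rho_def)

lemma kk_nn: "0 \<le> kk x" by (simp add: kk_def sum_nonneg nn)

lemma kk_eq: "(\<Sum>y\<in>G. P x y) = 1 - kk x"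
  using sum_split[of "P x" G] rs1[of x] by (simp add: kk_def)

lemma sum_kk: "(\<Sum>x\<in>G. kk x) \<le> real (card (\<Omega> - G))"
proof -
  have "(\<Sum>x\<in>G. kk x) = (\<Sum>y\<in>-G. \<Sum>x\<in>G. P y x)"
    unfolding kk_def by (subst sum.swap) (simp add: sym)
  also have "\<dots> \<le> (\<Sum>y\<in>-G. if y \<in> \<Omega> then 1 else 0)"
  proof (rule sum_mono)
    fix y assume y: "y \<in> -G"
    show "(\<Sum>x\<in>G. P y x) \<le> (if y \<in> \<Omega> then 1 else 0)"
    proof (cases "y \<in> \<Omega>")
      case True
      have "(\<Sum>x\<in>G. P y x) \<le> (\<Sum>x\<in>UNIV. P y x)"
        by (rule sum_mono2) (auto simp: nn)
      then show ?thesis using True rs1[of y] by simp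
    next
      case False
      have "(\<Sum>x\<in>G. P y x) = 0"
        using False GO by (intro sum.neutral) (auto simp: sym[of y] inv)
      then show ?thesis using False by simp
    qed
  qed
  also have "\<dots> = real (card (-G \<inter> \<Omega>))"
    by (simp add: sum.If_cases Int_def)
  also have "-G \<inter> \<Omega> = \<Omega> - G" by auto
  finally show ?thesis .
qed

lemma Phi_alt:
  assumes bnn: "\<And>y. y \<in> G \<Longrightarrow> 0 \<le> b y" and m: "0 < (\<Sum>y\<in>G. b y)"
  shows "Phi b = (\<Sum>y\<in>G. b y * ln (real (card G) * b y / (\<Sum>y\<in>G. b y)))"
proof -
  define m where "m = (\<Sum>y\<in>G. b y)"
  have "(\<Sum>y\<in>G. b y * ln (real (card G) * b y / m))
      = (\<Sum>y\<in>G. b y * ln (b y) - b y * ln m + b y * ln (real (card G)))"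
  proof (intro sum.cong refl)
    fix y assume y: "y \<in> G"
    show "b y * ln (real (card G) * b y / m) = b y * ln (b y) - b y * ln m + b y * ln (real (card G))"
    proof (cases "b y = 0")
      case True then show ?thesis by simp
    next
      case False
      then have "0 < b y" using bnn[OF y] by simp
      have m': "0 < m" using m by (simp add: m_def)
      have "ln (real (card G) * b y / m) = ln (real (card G)) + ln (b y) - ln m"
      proof -
        have "ln (real (card G) * b y / m) = ln (real (card G) * b y) - ln m"
          using \<open>0 < b y\<close> m' n_pos by (intro ln_divide_pos) auto
        also have "ln (real (card G) * b y) = ln (real (card G)) + ln (b y)"
          using \<open>0 < b y\<close> n_pos by (intro ln_mult_pos) auto
        finally show ?thesis .
      qed
      note e = this
      show ?thesis unfolding e by (simp add: algebra_simps)
    qed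
  qed
  also have "\<dots> = Phi b"
    by (simp add: Phi_def sum.distrib sum_subtractf sum_distrib_right[symmetric] m_def)
  finally show ?thesis by (simp add: m_def)
qed

lemma LS_b:
  assumes bpos: "\<And>y. y \<in> G \<Longrightarrow> 0 < b y"
  shows "Phi b \<le> A * ((1/2) * (\<Sum>x\<in>G. \<Sum>y\<in>G. P x y * (sqrt (b x) - sqrt (b y))^2)
                     + (\<Sum>x\<in>G. kk x * b x))"
proof -
  define F where "F x = (if x \<in> G then sqrt (b x) else 0)" for x
  define M where "M = real CARD('x)"
  define n where "n = real (card G)"
  define m where "m = (\<Sum>y\<in>G. b y)"
  have M: "0 < M" by (simp add: M_def)
  have m: "0 < m" unfolding m_def using Gne bpos by (intro sum_pos) auto
  have nM: "n \<le> M" unfolding n_def M_def by (simp add: card_mono)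
  have F2: "(F x)^2 = (if x \<in> G then b x else 0)" for x
    using bpos by (auto simp: F_def less_imp_le)
  have F2l: "(F x)^2 * ln ((F x)^2) = (if x \<in> G then b x * ln (b x) else 0)" for x
    by (simp add: F2)
  have ent: "Ent_unif (\<lambda>x. (F x)^2) = ((\<Sum>y\<in>G. b y * ln (b y)) - m * ln m + m * ln M) / M"
    unfolding Ent_unif_def unif_mean_def F2l
    by (simp add: F2 sumG m_def[symmetric] M_def[symmetric] ln_div m M field_simps)
  have ent2: "Ent_unif (\<lambda>x. (F x)^2) = (Phi b + m * (ln M - ln n)) / M"
    unfolding ent Phi_def m_def[symmetric] n_def[symmetric] by (simp add: algebra_simps)
  define D where "D x y = P x y * (F x - F y)^2" for x y
  have "(\<Sum>x\<in>UNIV. \<Sum>y\<in>UNIV. D x y)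
     = (\<Sum>x\<in>G. \<Sum>y\<in>G. D x y) + (\<Sum>x\<in>G. \<Sum>y\<in>-G. D x y)
       + ((\<Sum>x\<in>-G. \<Sum>y\<in>G. D x y) + (\<Sum>x\<in>-G. \<Sum>y\<in>-G. D x y))"
    using sum_split[of "\<lambda>x. \<Sum>y\<in>UNIV. D x y" G] sum_split[of "D _" G]
    by (simp add: sum.distrib)
  also have "(\<Sum>x\<in>G. \<Sum>y\<in>G. D x y) = (\<Sum>x\<in>G. \<Sum>y\<in>G. P x y * (sqrt (b x) - sqrt (b y))^2)"
    by (simp add: D_def F_def)
  also have "(\<Sum>x\<in>G. \<Sum>y\<in>-G. D x y) = (\<Sum>x\<in>G. kk x * b x)"
    using bpos by (auto simp: D_def F_def kk_def sum_distrib_right less_imp_le intro!: sum.cong)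
  also have "(\<Sum>x\<in>-G. \<Sum>y\<in>G. D x y) = (\<Sum>x\<in>G. kk x * b x)"
  proof -
    have "(\<Sum>x\<in>-G. \<Sum>y\<in>G. D x y) = (\<Sum>y\<in>G. \<Sum>x\<in>-G. D x y)" by (rule sum.swap)
    also have "\<dots> = (\<Sum>y\<in>G. kk y * b y)"
      using bpos by (auto simp: D_def F_def kk_def sum_distrib_right less_imp_le sym intro!: sum.cong)
    finally show ?thesis .
  qed
  also have "(\<Sum>x\<in>-G. \<Sum>y\<in>-G. D x y) = 0" by (simp add: D_def F_def)
  finally have dsum: "(\<Sum>x\<in>UNIV. \<Sum>y\<in>UNIV. D x y)
      = (\<Sum>x\<in>G. \<Sum>y\<in>G. P x y * (sqrt (b x) - sqrt (b y))^2) + 2 * (\<Sum>x\<in>G. kk x * b x)" by simp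
  have dir: "dirichlet_unif P F = ((1/2) * (\<Sum>x\<in>G. \<Sum>y\<in>G. P x y * (sqrt (b x) - sqrt (b y))^2)
                     + (\<Sum>x\<in>G. kk x * b x)) / M"
  proof -
    have "dirichlet_unif P F = (1/2) * (1/M) * (\<Sum>x\<in>UNIV. \<Sum>y\<in>UNIV. D x y)"
      unfolding dirichlet_unif_def D_def M_def
      by (simp add: sum_distrib_left mult.assoc)
    then show ?thesis using dsum by (simp add: field_simps)
  qed
  have "Ent_unif (\<lambda>x. (F x)^2) \<le> A * dirichlet_unif P F"
    using bpos by (intro LS) (auto simp: F_def less_imp_le)
  then have "(Phi b + m * (ln M - ln n)) / M \<le> A * (((1/2) * (\<Sum>x\<in>G. \<Sum>y\<in>G. P x y * (sqrt (b x) - sqrt (b y))^2)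
                     + (\<Sum>x\<in>G. kk x * b x)) / M)"
    by (simp add: ent2 dir)
  then have "Phi b + m * (ln M - ln n) \<le> A * ((1/2) * (\<Sum>x\<in>G. \<Sum>y\<in>G. P x y * (sqrt (b x) - sqrt (b y))^2)
                     + (\<Sum>x\<in>G. kk x * b x))"
    using M by (simp add: divide_le_eq mult.commute)
  moreover have "0 \<le> m * (ln M - ln n)"
    using m nM n_pos by (intro mult_nonneg_nonneg) (auto simp: n_def)
  ultimately show ?thesis by linarith
qed

end

context setting begin

lemma entropy_production:
  assumes bpos: "\<And>y. y \<in> G \<Longrightarrow> 0 < b y"
  shows "(\<Sum>y\<in>G. ((\<Sum>z\<in>G. b z * P z y) - b y) * ln (b y))
           - (\<Sum>y\<in>G. (\<Sum>z\<in>G. b z * P z y) - b y) * ln (\<Sum>y\<in>G. b y)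
           + (\<Sum>y\<in>G. (\<Sum>z\<in>G. b z * P z y) - b y) * ln (real (card G))
         \<le> -(1/A) * Phi b + rho * (\<Sum>y\<in>G. b y)"
proof -
  define d where "d y = (\<Sum>z\<in>G. b z * P z y) - b y" for y
  define m where "m = (\<Sum>y\<in>G. b y)"
  define n where "n = real (card G)"
  define L where "L y = ln (b y)" for y
  define K where "K = (\<Sum>x\<in>G. kk x * b x)"
  have m: "0 < m" unfolding m_def using Gne bpos by (intro sum_pos) auto
  have n: "0 < n" using n_pos by (simp add: n_def)
  have md: "(\<Sum>y\<in>G. d y) = - K"
  proof -
    have "(\<Sum>y\<in>G. \<Sum>z\<in>G. b z * P z y) = (\<Sum>z\<in>G. b z * (\<Sum>y\<in>G. P z y))"
      by (subst sum.swap) (simp add: sum_distrib_left)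
    also have "\<dots> = (\<Sum>z\<in>G. b z - kk z * b z)"
      by (simp add: kk_eq algebra_simps)
    finally show ?thesis
      by (simp add: d_def K_def sum_subtractf)
  qed
  define X1 where "X1 = (\<Sum>x\<in>G. \<Sum>y\<in>G. P x y * b x * L x)"
  define X2 where "X2 = (\<Sum>x\<in>G. \<Sum>y\<in>G. P x y * b x * L y)"
  define Sym where "Sym = (1/2) * (\<Sum>x\<in>G. \<Sum>y\<in>G. P x y * ((b x - b y) * (L x - L y)))"
  have X1': "(\<Sum>x\<in>G. \<Sum>y\<in>G. P x y * b y * L y) = X1"
    unfolding X1_def by (subst sum.swap) (simp add: sym)
  have X2': "(\<Sum>x\<in>G. \<Sum>y\<in>G. P x y * b y * L x) = X2"
    unfolding X2_def by (subst sum.swap) (simp add: sym)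
  have SymX: "Sym = X1 - X2"
  proof -
    have "(\<Sum>x\<in>G. \<Sum>y\<in>G. P x y * ((b x - b y) * (L x - L y)))
        = (\<Sum>x\<in>G. \<Sum>y\<in>G. P x y * b x * L x - P x y * b x * L y - P x y * b y * L x + P x y * b y * L y)"
      by (intro sum.cong refl) (simp add: algebra_simps)
    also have "\<dots> = X1 - X2 - X2 + X1"
      using X1' X2' by (simp add: X1_def X2_def sum.distrib sum_subtractf)
    finally show ?thesis by (simp add: Sym_def)
  qed
  have dL: "(\<Sum>y\<in>G. d y * L y) = X2 - X1 - (\<Sum>x\<in>G. kk x * b x * L x)"
  proof -
    have "(\<Sum>y\<in>G. (\<Sum>z\<in>G. b z * P z y) * L y) = (\<Sum>y\<in>G. \<Sum>z\<in>G. P z y * b z * L y)"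
      by (simp add: sum_distrib_right sum_distrib_left mult_ac)
    also have "\<dots> = X2" unfolding X2_def by (rule sum.swap)
    finally have a: "(\<Sum>y\<in>G. (\<Sum>z\<in>G. b z * P z y) * L y) = X2" .
    have b: "(\<Sum>y\<in>G. b y * L y) = X1 + (\<Sum>x\<in>G. kk x * b x * L x)"
    proof -
      have "(\<Sum>y\<in>G. b y * L y) = (\<Sum>y\<in>G. b y * L y * (\<Sum>z\<in>G. P y z) + kk y * b y * L y)"
        by (intro sum.cong refl) (simp add: kk_eq algebra_simps)
      also have "\<dots> = X1 + (\<Sum>x\<in>G. kk x * b x * L x)"
        by (simp add: X1_def sum.distrib sum_distrib_left mult_ac)
      finally show ?thesis .
    qed
    show ?thesis using a b by (simp add: d_def algebra_simps sum_subtractf)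
  qed
  define S2 where "S2 = (1/2) * (\<Sum>x\<in>G. \<Sum>y\<in>G. P x y * (sqrt (b x) - sqrt (b y))^2)"
  have S2Sym: "S2 \<le> Sym"
    unfolding S2_def Sym_def L_def
    using bpos by (intro mult_left_mono sum_mono mult_left_mono sqrt_ent_ineq) (auto simp: nn)
  have LSb: "Phi b \<le> A * (S2 + K)"
    using LS_b[OF bpos] by (simp add: S2_def K_def)
  then have "Phi b / A \<le> S2 + K" using Apos by (simp add: pos_divide_le_eq mult.commute)
  then have "Phi b / A - K \<le> S2" by linarith
  then have SymLow: "Phi b / A - K \<le> Sym" using S2Sym by linarith
  have lnrel: "L x - ln m + ln n = ln (n * b x / m)" if "x \<in> G" for x
  proof -
    have "ln (n * b x / m) = ln (n * b x) - ln m"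
      using bpos[OF that] m n by (intro ln_divide_pos) auto
    also have "ln (n * b x) = ln n + ln (b x)"
      using bpos[OF that] n by (intro ln_mult_pos) auto
    finally show ?thesis by (simp add: L_def)
  qed
  have e1: "(\<Sum>y\<in>G. d y * L y) - (\<Sum>y\<in>G. d y) * ln m + (\<Sum>y\<in>G. d y) * ln n
      = X2 - X1 - (\<Sum>x\<in>G. kk x * b x * L x) + K * ln m - K * ln n"
    unfolding dL md by (simp add: algebra_simps)
  have "(\<Sum>x\<in>G. kk x * b x * (L x - ln m + ln n))
      = (\<Sum>x\<in>G. kk x * b x * L x - kk x * b x * ln m + kk x * b x * ln n)"
    by (intro sum.cong refl) (simp add: algebra_simps)
  also have "\<dots> = (\<Sum>x\<in>G. kk x * b x * L x) - K * ln m + K * ln n"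
    by (simp add: sum.distrib sum_subtractf K_def sum_distrib_right)
  finally have e2: "(\<Sum>x\<in>G. kk x * b x * (L x - ln m + ln n))
      = (\<Sum>x\<in>G. kk x * b x * L x) - K * ln m + K * ln n" .
  have "(\<Sum>y\<in>G. d y * L y) - (\<Sum>y\<in>G. d y) * ln m + (\<Sum>y\<in>G. d y) * ln n
      = - Sym - (\<Sum>x\<in>G. kk x * b x * (L x - ln m + ln n))"
    unfolding e1 e2 SymX by simp
  also have "(\<Sum>x\<in>G. kk x * b x * (L x - ln m + ln n)) = (\<Sum>x\<in>G. kk x * b x * ln (n * b x / m))"
    by (intro sum.cong refl) (simp add: lnrel)
  also have "- Sym - (\<Sum>x\<in>G. kk x * b x * ln (n * b x / m))
      \<le> - (Phi b / A) + (\<Sum>x\<in>G. kk x * (b x * (1 - ln (n * b x / m))))"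
    using SymLow by (simp add: K_def algebra_simps sum_subtractf)
  also have "(\<Sum>x\<in>G. kk x * (b x * (1 - ln (n * b x / m)))) \<le> (\<Sum>x\<in>G. kk x * (m / n))"
  proof (intro sum_mono mult_left_mono kk_nn)
    fix x assume x: "x \<in> G"
    define g where "g = n * b x / m"
    have g: "0 < g" using bpos[OF x] m n by (simp add: g_def)
    have bx: "b x = (m / n) * g" using m n by (simp add: g_def)
    have "b x * (1 - ln (n * b x / m)) = (m / n) * (g * (1 - ln g))"
      by (simp add: bx g_def[symmetric] mult.assoc)
    also have "\<dots> \<le> (m / n) * 1"
      using m n g_one_minus_ln[OF g] by (intro mult_left_mono) auto
    finally show "b x * (1 - ln (n * b x / m)) \<le> m / n" by simp
  qed
  also have "(\<Sum>x\<in>G. kk x * (m / n)) \<le> rho * m"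
  proof -
    have "(\<Sum>x\<in>G. kk x * (m / n)) = (m / n) * (\<Sum>x\<in>G. kk x)"
      by (simp add: sum_distrib_left mult.commute)
    also have "\<dots> \<le> (m / n) * real (card (\<Omega> - G))"
      using m n sum_kk by (intro mult_left_mono) auto
    also have "\<dots> = rho * m" by (simp add: rho_def n_def)
    finally show ?thesis .
  qed
  finally show ?thesis
    by (simp add: d_def[symmetric] m_def[symmetric] n_def[symmetric] L_def[symmetric])
qed

end

lemma exp_summable_abs: "summable (\<lambda>k. \<bar>t\<bar>^k / fact k :: real)"
proof -
  have "summable (\<lambda>k. \<bar>t\<bar>^k /\<^sub>R fact k)" using exp_converges[of "\<bar>t\<bar>"] by (rule sums_summable)
  then show ?thesis by (simp add: divide_inverse mult.commute)
qed

lemma exp_suminf: "(\<Sum>k. t^k / fact k) = exp (t::real)"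
proof -
  have "(\<lambda>k. t^k /\<^sub>R fact k) sums exp t" by (rule exp_converges)
  then have "(\<lambda>k. t^k / fact k) sums exp t" by (simp add: divide_inverse mult.commute)
  then show ?thesis by (rule sums_unique[symmetric])
qed

lemma series_summable:
  assumes c: "\<And>k. \<bar>c k\<bar> \<le> C"
  shows "summable (\<lambda>k. c k / fact k * t ^ k :: real)"
proof (rule summable_comparison_test)
  show "\<exists>N. \<forall>n\<ge>N. norm (c n / fact n * t ^ n) \<le> C * (\<bar>t\<bar>^n / fact n)"
  proof (intro exI allI impI)
    fix n :: nat
    have "norm (c n / fact n * t ^ n) = \<bar>c n\<bar> * (\<bar>t\<bar>^n / fact n)"
      by (simp add: abs_mult power_abs)
    also have "\<dots> \<le> C * (\<bar>t\<bar>^n / fact n)"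
      using c[of n] by (intro mult_right_mono) auto
    finally show "norm (c n / fact n * t ^ n) \<le> C * (\<bar>t\<bar>^n / fact n)" .
  qed
  show "summable (\<lambda>n. C * (\<bar>t\<bar>^n / fact n))"
    by (rule summable_mult[OF exp_summable_abs])
qed

lemma xlnx_deriv:
  fixes g :: "real \<Rightarrow> real"
  assumes "DERIV g t :> g'" and "0 < g t"
  shows "DERIV (\<lambda>t. g t * ln (g t)) t :> g' * (ln (g t) + 1)"
proof -
  have "DERIV (\<lambda>t. ln (g t)) t :> 1 / g t * g'"
    by (rule DERIV_chain2[OF DERIV_ln_divide[OF assms(2)] assms(1)])
  from DERIV_mult[OF assms(1) this]
  have "DERIV (\<lambda>t. g t * ln (g t)) t :> g' * ln (g t) + 1 / g t * g' * g t" .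
  then show ?thesis using assms(2) by (simp add: field_simps)
qed

lemma stay_out: "w \<notin> G \<Longrightarrow> stay_in P G k w = 0"
  by (cases k) auto

context substoch begin

lemma stay_nn: "0 \<le> stay_in P G k w"
  by (induction k arbitrary: w) (auto intro!: sum_nonneg mult_nonneg_nonneg nn)

lemma stay_le1: "stay_in P G k w \<le> 1"
proof (induction k arbitrary: w)
  case 0 then show ?case by simp
next
  case (Suc k)
  have "(\<Sum>z\<in>UNIV. P w z * stay_in P G k z) \<le> (\<Sum>z\<in>UNIV. P w z)"
    using Suc by (intro sum_mono) (simp add: nn mult_left_le)
  then show ?case using rs[of w] by simp
qed

lemma stay_Suc_le: "stay_in P G (Suc k) w \<le> stay_in P G k w"
proof (induction k arbitrary: w)
  case 0
  have "(\<Sum>z\<in>UNIV. P w z * stay_in P G 0 z) \<le> (\<Sum>z\<in>UNIV. P w z)"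
    by (intro sum_mono) (simp add: nn)
  then show ?case using rs[of w] by simp
next
  case (Suc k)
  have "(\<Sum>z\<in>UNIV. P w z * stay_in P G (Suc k) z) \<le> (\<Sum>z\<in>UNIV. P w z * stay_in P G k z)"
    using Suc by (intro sum_mono mult_left_mono) (auto simp: nn)
  then show ?case by simp
qed

lemma stay_mono: "k \<le> L \<Longrightarrow> stay_in P G L w \<le> stay_in P G k w"
  using lift_Suc_antimono_le[of "\<lambda>k. stay_in P G k w", OF stay_Suc_le] by simp

end

context setting begin

definition Q :: "'x \<Rightarrow> 'x \<Rightarrow> real" where
  "Q x y = (if x \<in> G \<and> y \<in> G then P x y else 0)"

lemma Q_substoch: "substoch Q"
proof
  show "0 \<le> Q x y" for x y by (simp add: Q_def nn)
  show "(\<Sum>y\<in>UNIV. Q x y) \<le> 1" for x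
  proof -
    have "(\<Sum>y\<in>UNIV. Q x y) \<le> (\<Sum>y\<in>UNIV. P x y)"
      by (intro sum_mono) (simp add: Q_def nn)
    then show ?thesis using rs1[of x] by simp
  qed
qed

lemma mpowQ_nn: "0 \<le> mpow Q k x y"
  using substoch.mpow_nn[OF Q_substoch] .

lemma mpowQ_le1: "mpow Q k x y \<le> 1"
  using substoch.mpow_le1[OF Q_substoch] .

lemma mpowQ_out: "y \<notin> G \<Longrightarrow> z \<in> G \<Longrightarrow> mpow Q k z y = 0"
  by (cases k) (auto simp: Q_def)

lemma mpowQ_le: "mpow Q k x y \<le> mpow P k x y"
proof (induction k arbitrary: y)
  case 0 then show ?case by simp
next
  case (Suc k)
  have QP: "Q z y \<le> P z y" and Qn: "0 \<le> Q z y" for z y by (auto simp: Q_def nn)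
  have "mpow Q (Suc k) x y = (\<Sum>z\<in>UNIV. mpow Q k x z * Q z y)" by simp
  also have "\<dots> \<le> (\<Sum>z\<in>UNIV. mpow P k x z * P z y)"
    by (intro sum_mono mult_mono Suc.IH QP Qn mpow_nn)
  finally show ?case by simp
qed

lemma mpowQ_stay: "z \<in> G \<Longrightarrow> (\<Sum>y\<in>UNIV. mpow Q k z y) = stay_in P G k z"
proof (induction k arbitrary: z)
  case 0 then show ?case by (simp add: sum.delta)
next
  case (Suc k)
  have "(\<Sum>y\<in>UNIV. mpow Q (Suc k) z y) = (\<Sum>y\<in>UNIV. \<Sum>w\<in>UNIV. Q z w * mpow Q k w y)"
    by (simp only: mpow_Suc_left)
  also have "\<dots> = (\<Sum>w\<in>UNIV. Q z w * (\<Sum>y\<in>UNIV. mpow Q k w y))"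
    by (subst sum.swap) (simp add: sum_distrib_left)
  also have "\<dots> = (\<Sum>w\<in>UNIV. P z w * stay_in P G k w)"
  proof (intro sum.cong refl)
    fix w
    show "Q z w * (\<Sum>y\<in>UNIV. mpow Q k w y) = P z w * stay_in P G k w"
    proof (cases "w \<in> G")
      case True
      have "Q z w = P z w" using True Suc.prems by (simp add: Q_def)
      then show ?thesis by (simp only: Suc.IH[OF True])
    next
      case False
      have "Q z w = 0" using False by (simp add: Q_def)
      then show ?thesis using False by (simp add: stay_out)
    qed
  qed
  finally show ?case using Suc by simp
qed

lemma mpowQ_stay_G: "z \<in> G \<Longrightarrow> (\<Sum>y\<in>G. mpow Q k z y) = stay_in P G k z"
proof -
  assume z: "z \<in> G"
  have "(\<Sum>y\<in>UNIV. mpow Q k z y) = (\<Sum>y\<in>G. mpow Q k z y) + (\<Sum>y\<in>-G. mpow Q k z y)"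
    by (rule sum_split)
  moreover have "(\<Sum>y\<in>-G. mpow Q k z y) = 0"
    using z by (intro sum.neutral) (auto simp: mpowQ_out)
  ultimately show ?thesis using mpowQ_stay[OF z] by simp
qed

definition rr :: "('x \<Rightarrow> real) \<Rightarrow> nat \<Rightarrow> 'x \<Rightarrow> real" where
  "rr b0 k y = (\<Sum>z\<in>G. b0 z * mpow Q k z y)"

definition SS :: "('x \<Rightarrow> real) \<Rightarrow> real \<Rightarrow> 'x \<Rightarrow> real" where
  "SS b0 t y = (\<Sum>k. rr b0 k y / fact k * t ^ k)"

definition BB :: "('x \<Rightarrow> real) \<Rightarrow> real \<Rightarrow> 'x \<Rightarrow> real" where
  "BB b0 t y = exp (- t) * SS b0 t y"

lemma rr_0: "y \<in> G \<Longrightarrow> rr b0 0 y = b0 y"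
proof -
  assume y: "y \<in> G"
  have "rr b0 0 y = (\<Sum>z\<in>G. if z = y then b0 z else 0)"
    unfolding rr_def by (intro sum.cong refl) auto
  then show ?thesis using y by simp
qed

lemma rr_Suc: "y \<in> G \<Longrightarrow> rr b0 (Suc k) y = (\<Sum>w\<in>G. rr b0 k w * P w y)"
proof -
  assume y: "y \<in> G"
  have "rr b0 (Suc k) y = (\<Sum>z\<in>G. \<Sum>w\<in>UNIV. b0 z * mpow Q k z w * Q w y)"
    by (simp add: rr_def sum_distrib_left mult.assoc)
  also have "\<dots> = (\<Sum>w\<in>UNIV. \<Sum>z\<in>G. b0 z * mpow Q k z w * Q w y)"
    by (rule sum.swap)
  also have "\<dots> = (\<Sum>w\<in>UNIV. rr b0 k w * Q w y)"
    by (simp add: rr_def sum_distrib_right)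
  also have "\<dots> = (\<Sum>w\<in>UNIV. if w \<in> G then rr b0 k w * P w y else 0)"
    using y by (intro sum.cong refl) (simp add: Q_def)
  also have "\<dots> = (\<Sum>w\<in>G. rr b0 k w * P w y)" by (rule sumG)
  finally show ?thesis .
qed

lemma rr_bound: "\<bar>rr b0 k y\<bar> \<le> (\<Sum>z\<in>G. \<bar>b0 z\<bar>)"
proof -
  have "\<bar>rr b0 k y\<bar> \<le> (\<Sum>z\<in>G. \<bar>b0 z * mpow Q k z y\<bar>)"
    unfolding rr_def by (rule sum_abs)
  also have "\<dots> \<le> (\<Sum>z\<in>G. \<bar>b0 z\<bar>)"
    by (intro sum_mono) (simp add: abs_mult mpowQ_nn mpowQ_le1 mult_left_le)
  finally show ?thesis .
qed

lemma rr_nn: "(\<And>z. z \<in> G \<Longrightarrow> 0 \<le> b0 z) \<Longrightarrow> 0 \<le> rr b0 k y"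
  unfolding rr_def by (intro sum_nonneg) (auto simp: mpowQ_nn)

lemma rr_mass: "(\<Sum>y\<in>G. rr b0 k y) = (\<Sum>z\<in>G. b0 z * stay_in P G k z)"
proof -
  have "(\<Sum>y\<in>G. rr b0 k y) = (\<Sum>z\<in>G. b0 z * (\<Sum>y\<in>G. mpow Q k z y))"
    unfolding rr_def by (subst sum.swap) (simp add: sum_distrib_left)
  also have "\<dots> = (\<Sum>z\<in>G. b0 z * stay_in P G k z)"
    by (intro sum.cong refl) (simp add: mpowQ_stay_G)
  finally show ?thesis .
qed

lemma SS_summable: "summable (\<lambda>k. rr b0 k y / fact k * t ^ k)"
  by (rule series_summable[OF rr_bound])

lemma SS_deriv: "DERIV (\<lambda>t. SS b0 t y) t :> (\<Sum>k. rr b0 (Suc k) y / fact k * t ^ k)"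
proof -
  define c where "c k = rr b0 k y / fact k" for k
  have "\<And>s. summable (\<lambda>n. c n * s^n)" unfolding c_def by (rule SS_summable)
  then have "((\<lambda>t. \<Sum>n. c n * t^n) has_field_derivative (\<Sum>n. diffs c n * t^n)) (at t)"
    by (rule termdiffs_strong_converges_everywhere)
  moreover have "diffs c n = rr b0 (Suc n) y / fact n" for n
    by (simp add: diffs_def c_def fact_Suc field_simps del: of_nat_Suc)
  ultimately show ?thesis by (simp add: SS_def c_def)
qed

lemma SS_deriv_G:
  assumes y: "y \<in> G"
  shows "(\<Sum>k. rr b0 (Suc k) y / fact k * t ^ k) = (\<Sum>w\<in>G. SS b0 t w * P w y)"
proof -
  have "(\<Sum>k. rr b0 (Suc k) y / fact k * t ^ k) = (\<Sum>k. \<Sum>w\<in>G. rr b0 k w / fact k * t ^ k * P w y)"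
    unfolding rr_Suc[OF y] sum_divide_distrib sum_distrib_right
    by (intro suminf_cong sum.cong refl) (simp add: mult_ac)
  also have "\<dots> = (\<Sum>w\<in>G. \<Sum>k. rr b0 k w / fact k * t ^ k * P w y)"
    by (rule suminf_sum) (intro summable_mult2 SS_summable)
  also have "\<dots> = (\<Sum>w\<in>G. SS b0 t w * P w y)"
    unfolding SS_def by (intro sum.cong refl suminf_mult2[symmetric] SS_summable)
  finally show ?thesis .
qed

lemma BB_deriv:
  assumes y: "y \<in> G"
  shows "DERIV (\<lambda>t. BB b0 t y) t :> (\<Sum>w\<in>G. BB b0 t w * P w y) - BB b0 t y"
proof -
  have "DERIV (\<lambda>t. exp (- t) * SS b0 t y) t :>
      (exp (- t) * (- 1)) * SS b0 t y + (\<Sum>k. rr b0 (Suc k) y / fact k * t ^ k) * exp (- t)"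
    by (rule DERIV_mult DERIV_chain2[OF DERIV_exp] DERIV_minus DERIV_ident SS_deriv)+
  moreover have "(exp (- t) * (- 1)) * SS b0 t y + (\<Sum>k. rr b0 (Suc k) y / fact k * t ^ k) * exp (- t)
      = (\<Sum>w\<in>G. BB b0 t w * P w y) - BB b0 t y"
    unfolding SS_deriv_G[OF y] by (simp add: BB_def sum_distrib_left sum_distrib_right mult_ac)
  ultimately show ?thesis by (simp add: BB_def)
qed

lemma SS_ge: "(\<And>z. z \<in> G \<Longrightarrow> 0 \<le> b0 z) \<Longrightarrow> y \<in> G \<Longrightarrow> 0 \<le> t \<Longrightarrow> b0 y \<le> SS b0 t y"
proof -
  assume b0: "\<And>z. z \<in> G \<Longrightarrow> 0 \<le> b0 z" and y: "y \<in> G" and t: "0 \<le> t"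
  have nnf: "0 \<le> rr b0 n y / fact n * t ^ n" for n
    using b0 t by (intro mult_nonneg_nonneg divide_nonneg_nonneg rr_nn) auto
  have "(\<Sum>k\<in>{0}. rr b0 k y / fact k * t ^ k) \<le> SS b0 t y"
    unfolding SS_def by (rule sum_le_suminf[OF SS_summable], simp, rule nnf)
  then show ?thesis by (simp add: rr_0[OF y])
qed

lemma BB_pos: "(\<And>z. z \<in> G \<Longrightarrow> 0 < b0 z) \<Longrightarrow> y \<in> G \<Longrightarrow> 0 \<le> t \<Longrightarrow> 0 < BB b0 t y"
proof -
  assume b0: "\<And>z. z \<in> G \<Longrightarrow> 0 < b0 z" and y: "y \<in> G" and t: "0 \<le> t"
  have "b0 y \<le> SS b0 t y" using b0 y t by (intro SS_ge) (auto simp: less_imp_le)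
  then have "0 < SS b0 t y" using b0[OF y] by linarith
  then show ?thesis by (simp add: BB_def)
qed

lemma BB_0: "y \<in> G \<Longrightarrow> BB b0 0 y = b0 y"
proof -
  assume y: "y \<in> G"
  have "(\<Sum>k. rr b0 k y / fact k * 0 ^ k) = rr b0 0 y / fact 0" by (rule powser_zero)
  then show ?thesis by (simp add: BB_def SS_def rr_0[OF y])
qed

lemma BB_poi: "BB b0 t y = (\<Sum>k. poi_pmf t k * rr b0 k y)"
proof -
  have "BB b0 t y = (\<Sum>k. exp (- t) * (rr b0 k y / fact k * t ^ k))"
    unfolding BB_def SS_def by (rule suminf_mult[symmetric, OF SS_summable])
  also have "\<dots> = (\<Sum>k. poi_pmf t k * rr b0 k y)"
    by (simp add: poi_pmf_def field_simps)
  finally show ?thesis .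
qed

lemma BB_mass:
  assumes b0: "\<And>z. z \<in> G \<Longrightarrow> 0 \<le> b0 z" and t: "0 \<le> t"
  shows "(\<Sum>y\<in>G. BB b0 t y) \<le> (\<Sum>y\<in>G. b0 y)"
proof -
  define m0 where "m0 = (\<Sum>y\<in>G. b0 y)"
  have "(\<Sum>y\<in>G. SS b0 t y) = (\<Sum>k. \<Sum>y\<in>G. rr b0 k y / fact k * t ^ k)"
    unfolding SS_def by (rule suminf_sum[symmetric]) (rule SS_summable)
  also have "\<dots> \<le> (\<Sum>k. m0 * (t ^ k / fact k))"
  proof (rule suminf_le)
    show "summable (\<lambda>k. \<Sum>y\<in>G. rr b0 k y / fact k * t ^ k)"
      by (intro summable_sum SS_summable)
    show "summable (\<lambda>k. m0 * (t ^ k / fact k))"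
      using exp_converges[of t] by (intro summable_mult) (auto simp: sums_iff divide_inverse mult.commute)
    fix k
    have "(\<Sum>y\<in>G. rr b0 k y) \<le> m0"
    proof -
      have "(\<Sum>y\<in>G. rr b0 k y) = (\<Sum>z\<in>G. b0 z * stay_in P G k z)" by (rule rr_mass)
      also have "\<dots> \<le> (\<Sum>z\<in>G. b0 z)"
        using b0 by (intro sum_mono) (simp add: mult_left_le stay_le1 stay_nn)
      finally show ?thesis by (simp add: m0_def)
    qed
    then have "(\<Sum>y\<in>G. rr b0 k y) * (t ^ k / fact k) \<le> m0 * (t ^ k / fact k)"
      using t by (intro mult_right_mono) auto
    moreover have "(\<Sum>y\<in>G. rr b0 k y / fact k * t ^ k) = (\<Sum>y\<in>G. rr b0 k y * (t ^ k / fact k))"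
      by (intro sum.cong refl) (simp add: divide_inverse mult_ac)
    moreover have "\<dots> = (\<Sum>y\<in>G. rr b0 k y) * (t ^ k / fact k)"
      by (rule sum_distrib_right[symmetric])
    ultimately show "(\<Sum>y\<in>G. rr b0 k y / fact k * t ^ k) \<le> m0 * (t ^ k / fact k)"
      by simp
  qed
  also have "\<dots> = m0 * exp t"
    using exp_converges[of t] by (subst suminf_mult) (auto simp: sums_iff divide_inverse mult.commute exp_suminf)
  finally have "(\<Sum>y\<in>G. SS b0 t y) \<le> m0 * exp t" .
  then have "exp (- t) * (\<Sum>y\<in>G. SS b0 t y) \<le> exp (- t) * (m0 * exp t)"
    by (intro mult_left_mono) auto
  then show ?thesis by (simp add: BB_def sum_distrib_left m0_def exp_minus field_simps)
qed

end

context setting begin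

lemma Phi_cong:
  assumes "\<And>y. y \<in> G \<Longrightarrow> b y = c y"
  shows "Phi b = Phi c"
proof -
  have 1: "(\<Sum>y\<in>G. b y * ln (b y)) = (\<Sum>y\<in>G. c y * ln (c y))" using assms by (intro sum.cong) auto
  have 2: "(\<Sum>y\<in>G. b y) = (\<Sum>y\<in>G. c y)" using assms by (intro sum.cong) auto
  show ?thesis unfolding Phi_def 1 2 ..
qed

lemma Phi_deriv:
  assumes bpos: "\<And>y. y \<in> G \<Longrightarrow> 0 < BB b0 t y"
  shows "DERIV (\<lambda>t. Phi (BB b0 t)) t :>
     (\<Sum>y\<in>G. ((\<Sum>w\<in>G. BB b0 t w * P w y) - BB b0 t y) * (ln (BB b0 t y) + 1))
     - (\<Sum>y\<in>G. (\<Sum>w\<in>G. BB b0 t w * P w y) - BB b0 t y) * (ln (\<Sum>y\<in>G. BB b0 t y) + 1)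
     + (\<Sum>y\<in>G. (\<Sum>w\<in>G. BB b0 t w * P w y) - BB b0 t y) * ln (real (card G))"
proof -
  define d where "d y = (\<Sum>w\<in>G. BB b0 t w * P w y) - BB b0 t y" for y
  have m: "0 < (\<Sum>y\<in>G. BB b0 t y)" using Gne bpos by (intro sum_pos) auto
  have d1: "DERIV (\<lambda>t. \<Sum>y\<in>G. BB b0 t y * ln (BB b0 t y)) t :> (\<Sum>y\<in>G. d y * (ln (BB b0 t y) + 1))"
    by (rule DERIV_sum) (unfold d_def, rule xlnx_deriv[OF BB_deriv bpos], assumption+)
  have dm: "DERIV (\<lambda>t. \<Sum>y\<in>G. BB b0 t y) t :> (\<Sum>y\<in>G. d y)"
    by (rule DERIV_sum) (unfold d_def, rule BB_deriv, assumption)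
  have d2: "DERIV (\<lambda>t. (\<Sum>y\<in>G. BB b0 t y) * ln (\<Sum>y\<in>G. BB b0 t y)) t :>
      (\<Sum>y\<in>G. d y) * (ln (\<Sum>y\<in>G. BB b0 t y) + 1)"
    by (rule xlnx_deriv[OF dm m])
  have d3: "DERIV (\<lambda>t. (\<Sum>y\<in>G. BB b0 t y) * ln (real (card G))) t :> (\<Sum>y\<in>G. d y) * ln (real (card G))"
    by (rule DERIV_cmult_right[OF dm])
  have "DERIV (\<lambda>t. (\<Sum>y\<in>G. BB b0 t y * ln (BB b0 t y)) - (\<Sum>y\<in>G. BB b0 t y) * ln (\<Sum>y\<in>G. BB b0 t y)
       + (\<Sum>y\<in>G. BB b0 t y) * ln (real (card G))) t :>
      (\<Sum>y\<in>G. d y * (ln (BB b0 t y) + 1)) - (\<Sum>y\<in>G. d y) * (ln (\<Sum>y\<in>G. BB b0 t y) + 1)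
      + (\<Sum>y\<in>G. d y) * ln (real (card G))"
    by (rule DERIV_add DERIV_diff d1 d2 d3)+
  then show ?thesis unfolding Phi_def d_def .
qed

lemma gronwall_pos:
  assumes b0: "\<And>z. z \<in> G \<Longrightarrow> 0 < b0 z" and T: "0 \<le> T"
  shows "Phi (BB b0 T) \<le> exp (- T / A) * Phi b0 + A * rho * (\<Sum>y\<in>G. b0 y)"
proof -
  define m0 where "m0 = (\<Sum>y\<in>G. b0 y)"
  have m0: "0 \<le> m0" unfolding m0_def using b0 by (intro sum_nonneg) (auto simp: less_imp_le)
  define Psi where "Psi t = exp (t / A) * (Phi (BB b0 t) - A * rho * m0)" for t
  have "Psi T \<le> Psi 0"
  proof (rule DERIV_nonpos_imp_nonincreasing[of 0 T Psi])
    show "0 \<le> T" by (rule T)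
    fix t assume t: "0 \<le> t" "t \<le> T"
    have bpos: "\<And>y. y \<in> G \<Longrightarrow> 0 < BB b0 t y" using b0 t(1) by (intro BB_pos) auto
    define b where "b = BB b0 t"
    define d where "d y = (\<Sum>w\<in>G. b w * P w y) - b y" for y
    define m where "m = (\<Sum>y\<in>G. b y)"
    define D where "D = (\<Sum>y\<in>G. d y * (ln (b y) + 1)) - (\<Sum>y\<in>G. d y) * (ln m + 1)
                      + (\<Sum>y\<in>G. d y) * ln (real (card G))"
    have dPhi: "DERIV (\<lambda>t. Phi (BB b0 t)) t :> D"
      using Phi_deriv[OF bpos] by (simp add: D_def d_def m_def b_def)
    have "D = (\<Sum>y\<in>G. d y * ln (b y)) - (\<Sum>y\<in>G. d y) * ln m + (\<Sum>y\<in>G. d y) * ln (real (card G))"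
      by (simp add: D_def distrib_left sum.distrib algebra_simps)
    also have "\<dots> \<le> -(1/A) * Phi b + rho * m"
      using entropy_production[of b] bpos by (simp add: d_def m_def b_def)
    finally have Dle: "D \<le> -(1/A) * Phi b + rho * m" .
    have mle: "m \<le> m0"
      unfolding m_def m0_def b_def using b0 t(1) by (intro BB_mass) (auto simp: less_imp_le)
    have dPsi: "DERIV Psi t :> exp (t / A) * (1 / A) * (Phi b - A * rho * m0) + D * exp (t / A)"
    proof -
      have e: "DERIV (\<lambda>t. exp (t / A)) t :> exp (t / A) * (1 / A)"
        by (rule DERIV_chain2[OF DERIV_exp DERIV_cdivide[OF DERIV_ident]])
      have "DERIV (\<lambda>t. Phi (BB b0 t) - A * rho * m0) t :> D - 0"
        by (rule DERIV_diff dPhi DERIV_const)+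
      from DERIV_mult[OF e this]
      have "DERIV (\<lambda>t. exp (t / A) * (Phi (BB b0 t) - A * rho * m0)) t :>
          exp (t / A) * (1 / A) * (Phi b - A * rho * m0) + D * exp (t / A)"
        by (simp add: b_def)
      moreover have "Psi = (\<lambda>t. exp (t / A) * (Phi (BB b0 t) - A * rho * m0))"
        by (rule ext) (simp add: Psi_def)
      ultimately show ?thesis by simp
    qed
    have "exp (t / A) * (1 / A) * (Phi b - A * rho * m0) + D * exp (t / A)
        = exp (t / A) * ((1 / A) * Phi b - rho * m0 + D)"
      using Apos by (simp add: field_simps)
    also have "\<dots> \<le> exp (t / A) * (rho * (m - m0))"
    proof (rule mult_left_mono)
      show "(1 / A) * Phi b - rho * m0 + D \<le> rho * (m - m0)"
        using Dle by (simp add: algebra_simps)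
    qed simp
    also have "\<dots> \<le> 0"
      using mle rho_nn by (intro mult_nonneg_nonpos) (auto intro: mult_nonneg_nonpos)
    finally show "\<exists>y. DERIV Psi t :> y \<and> y \<le> 0" using dPsi by blast
  qed
  moreover have "Psi 0 = Phi b0 - A * rho * m0"
    by (simp add: Psi_def BB_0 cong: Phi_cong)
  ultimately have "exp (T / A) * (Phi (BB b0 T) - A * rho * m0) \<le> Phi b0 - A * rho * m0"
    by (simp add: Psi_def)
  then have "exp (- T / A) * (exp (T / A) * (Phi (BB b0 T) - A * rho * m0)) \<le> exp (- T / A) * (Phi b0 - A * rho * m0)"
    by (intro mult_left_mono) auto
  then have "Phi (BB b0 T) - A * rho * m0 \<le> exp (- T / A) * (Phi b0 - A * rho * m0)"
    by (simp add: mult.assoc[symmetric] exp_add[symmetric])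
  moreover have "0 \<le> exp (- T / A) * (A * rho * m0)"
    using Apos rho_nn m0 by simp
  ultimately show ?thesis unfolding m0_def[symmetric] by (simp add: algebra_simps)
qed

lemma rr_lin: "rr (\<lambda>z. b0 z + e) k y = rr b0 k y + e * rr (\<lambda>_. 1) k y"
  by (simp add: rr_def sum.distrib distrib_right sum_distrib_left)

lemma BB_lin: "BB (\<lambda>z. b0 z + e) t y = BB b0 t y + e * BB (\<lambda>_. 1) t y"
proof -
  have "(\<lambda>k. rr (\<lambda>z. b0 z + e) k y / fact k * t ^ k)
      = (\<lambda>k. rr b0 k y / fact k * t ^ k + e * (rr (\<lambda>_. 1) k y / fact k * t ^ k))"
    unfolding rr_lin by (simp add: field_simps)
  note eqf = this
  have "SS (\<lambda>z. b0 z + e) t y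
      = (\<Sum>k. rr b0 k y / fact k * t ^ k + e * (rr (\<lambda>_. 1) k y / fact k * t ^ k))"
    unfolding SS_def eqf ..
  also have "\<dots> = (\<Sum>k. rr b0 k y / fact k * t ^ k) + (\<Sum>k. e * (rr (\<lambda>_. 1) k y / fact k * t ^ k))"
    by (rule suminf_add[symmetric, OF SS_summable summable_mult[OF SS_summable]])
  also have "(\<Sum>k. e * (rr (\<lambda>_. 1) k y / fact k * t ^ k)) = e * SS (\<lambda>_. 1) t y"
    unfolding SS_def by (rule suminf_mult[OF SS_summable])
  finally have "SS (\<lambda>z. b0 z + e) t y = SS b0 t y + e * SS (\<lambda>_. 1) t y"
    unfolding SS_def .
  then show ?thesis by (simp add: BB_def algebra_simps)
qed

lemma Phi_tendsto:
  assumes f: "\<And>y. ((\<lambda>e. f e y) \<longlongrightarrow> g y) F"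
  shows "((\<lambda>e. Phi (f e)) \<longlongrightarrow> Phi g) F"
proof -
  have 1: "((\<lambda>e. \<Sum>y\<in>G. f e y * ln (f e y)) \<longlongrightarrow> (\<Sum>y\<in>G. g y * ln (g y))) F"
    by (rule tendsto_sum) (rule tendsto_xlnx[OF f])
  have 2: "((\<lambda>e. \<Sum>y\<in>G. f e y) \<longlongrightarrow> (\<Sum>y\<in>G. g y)) F"
    by (rule tendsto_sum) (rule f)
  have 3: "((\<lambda>e. (\<Sum>y\<in>G. f e y) * ln (\<Sum>y\<in>G. f e y)) \<longlongrightarrow> (\<Sum>y\<in>G. g y) * ln (\<Sum>y\<in>G. g y)) F"
    by (rule tendsto_xlnx[OF 2])
  have 4: "((\<lambda>e. (\<Sum>y\<in>G. f e y) * ln (real (card G))) \<longlongrightarrow> (\<Sum>y\<in>G. g y) * ln (real (card G))) F"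
    by (rule tendsto_mult[OF 2 tendsto_const])
  show ?thesis unfolding Phi_def by (rule tendsto_add tendsto_diff 1 3 4)+
qed

lemma gronwall:
  assumes b0: "\<And>z. z \<in> G \<Longrightarrow> 0 \<le> b0 z" and T: "0 \<le> T"
  shows "Phi (BB b0 T) \<le> exp (- T / A) * Phi b0 + A * rho * (\<Sum>y\<in>G. b0 y)"
proof -
  have ineq: "\<forall>\<^sub>F e in at_right 0. Phi (BB (\<lambda>z. b0 z + e) T)
      \<le> exp (- T / A) * Phi (\<lambda>z. b0 z + e) + A * rho * (\<Sum>y\<in>G. b0 y + e)"
    unfolding eventually_at_right_field
  proof (intro exI[of _ 1] conjI allI impI)
    fix e :: real assume e: "0 < e" "e < 1"
    show "Phi (BB (\<lambda>z. b0 z + e) T) \<le> exp (- T / A) * Phi (\<lambda>z. b0 z + e) + A * rho * (\<Sum>y\<in>G. b0 y + e)"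
      using b0 e by (intro gronwall_pos T) (auto intro: add_nonneg_pos)
  qed simp
  have l0: "((\<lambda>e::real. e) \<longlongrightarrow> 0) (at_right 0)" by (rule tendsto_ident_at)
  have l1: "((\<lambda>e. Phi (BB (\<lambda>z. b0 z + e) T)) \<longlongrightarrow> Phi (BB b0 T)) (at_right 0)"
  proof (rule Phi_tendsto)
    fix y
    have "((\<lambda>e. BB b0 T y + e * BB (\<lambda>_. 1) T y) \<longlongrightarrow> BB b0 T y + 0 * BB (\<lambda>_. 1) T y) (at_right 0)"
      by (intro tendsto_intros l0)
    then show "((\<lambda>e. BB (\<lambda>z. b0 z + e) T y) \<longlongrightarrow> BB b0 T y) (at_right 0)"
      by (simp add: BB_lin)
  qed
  have l2: "((\<lambda>e. exp (- T / A) * Phi (\<lambda>z. b0 z + e) + A * rho * (\<Sum>y\<in>G. b0 y + e))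
      \<longlongrightarrow> exp (- T / A) * Phi b0 + A * rho * (\<Sum>y\<in>G. b0 y + 0)) (at_right 0)"
  proof (intro tendsto_intros l0)
    show "((\<lambda>e. Phi (\<lambda>z. b0 z + e)) \<longlongrightarrow> Phi b0) (at_right 0)"
    proof (rule Phi_tendsto)
      fix y
      have "((\<lambda>e. b0 y + e) \<longlongrightarrow> b0 y + 0) (at_right 0)" by (intro tendsto_intros l0)
      then show "((\<lambda>e. b0 y + e) \<longlongrightarrow> b0 y) (at_right 0)" by simp
    qed
  qed
  have "Phi (BB b0 T) \<le> exp (- T / A) * Phi b0 + A * rho * (\<Sum>y\<in>G. b0 y + 0)"
    by (rule tendsto_le[OF _ l2 l1 ineq]) simp
  then show ?thesis by simp
qed

end

lemma final_ineq:
  fixes R e m :: real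
  assumes R: "0 \<le> R" and e: "0 \<le> e" and m1: "1 - e \<le> m" and m2: "m \<le> 1"
    and small: "2 * e + sqrt (R / 2) < 1"
  shows "(1 - m) + sqrt (R / (2 * m)) \<le> 2 * e + sqrt (R / 2)"
proof -
  define a where "a = sqrt (R / 2)"
  define s where "s = sqrt m"
  have a0: "0 \<le> a" using R by (simp add: a_def)
  have a1: "a < 1" using small e unfolding a_def[symmetric] by linarith
  have mhalf: "1/2 < m" using m1 small a0 e unfolding a_def[symmetric] by linarith
  have s0: "0 < s" using mhalf by (simp add: s_def)
  have ss: "s * s = m" using mhalf by (simp add: s_def)
  have s1: "s \<le> 1" using m2 by (simp add: s_def)
  have "s * s \<le> s * 1" using s1 s0 by (intro mult_left_mono) auto
  then have sm: "m \<le> s" using ss by simp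
  have key: "(1 - s) / s \<le> 1 - m"
  proof -
    have "1 \<le> s * (1 + s)" using sm mhalf ss by (simp add: algebra_simps)
    then have "(1 - s) * 1 \<le> (1 - s) * (s * (1 + s))" using s1 by (intro mult_left_mono) auto
    then have "(1 - s) \<le> s * ((1 - s) * (1 + s))" by (simp add: algebra_simps)
    then have "(1 - s) / s \<le> (1 - s) * (1 + s)" using s0 by (simp add: divide_le_eq mult.commute)
    also have "\<dots> = 1 - m" using ss by (simp add: algebra_simps)
    finally show ?thesis .
  qed
  have "sqrt (R / (2 * m)) = a / s"
    by (simp add: a_def s_def real_sqrt_divide[symmetric] mult.commute)
  also have "\<dots> = a + a * ((1 - s) / s)" using s0 by (simp add: field_simps)
  also have "\<dots> \<le> a + 1 * ((1 - s) / s)"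
    using a1 s0 s1 by (intro add_left_mono mult_right_mono) auto
  also have "\<dots> \<le> a + (1 - m)" using key by simp
  finally have "sqrt (R / (2 * m)) \<le> a + (1 - m)" .
  then show ?thesis using m1 by (simp add: a_def)
qed

lemma tv_le1:
  fixes \<nu> \<rho> :: "'x::finite \<Rightarrow> real"
  assumes "\<And>y. 0 \<le> \<nu> y" "\<And>y. 0 \<le> \<rho> y" "(\<Sum>y\<in>UNIV. \<nu> y) = 1" "(\<Sum>y\<in>UNIV. \<rho> y) = 1"
  shows "tv_dist \<nu> \<rho> \<le> 1"
proof -
  have "(\<Sum>y\<in>UNIV. \<bar>\<nu> y - \<rho> y\<bar>) \<le> (\<Sum>y\<in>UNIV. \<nu> y + \<rho> y)"
  proof (rule sum_mono)
    fix y
    have "0 \<le> \<nu> y" "0 \<le> \<rho> y" using assms by auto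
    then show "\<bar>\<nu> y - \<rho> y\<bar> \<le> \<nu> y + \<rho> y" by (simp add: abs_le_iff)
  qed
  then show ?thesis using assms by (simp add: tv_dist_def sum.distrib)
qed

lemma cond_unif_nn: "0 \<le> cond_unif \<Omega> y" by (simp add: cond_unif_def)

lemma cond_unif_sum: "finite \<Omega> \<Longrightarrow> \<Omega> \<noteq> {} \<Longrightarrow> (\<Sum>y\<in>UNIV. cond_unif \<Omega> y) = 1"
  for \<Omega> :: "'x::finite set"
  by (simp add: cond_unif_def sumG[of \<Omega> "\<lambda>_. 1 / real (card \<Omega>)", simplified])

context setting begin

lemma heat_row:
  assumes T: "0 \<le> T"
  shows "(\<Sum>z\<in>UNIV. \<nu> z * heat P T z y) = (\<Sum>k. poi_pmf T k * (\<Sum>z\<in>UNIV. \<nu> z * mpow P k z y))"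
proof -
  have "(\<Sum>z\<in>UNIV. \<nu> z * heat P T z y) = (\<Sum>z\<in>UNIV. \<Sum>k. \<nu> z * (poi_pmf T k * mpow P k z y))"
    unfolding heat_eq by (intro sum.cong refl suminf_mult[symmetric] heat_summ T)
  also have "\<dots> = (\<Sum>k. \<Sum>z\<in>UNIV. \<nu> z * (poi_pmf T k * mpow P k z y))"
    by (rule suminf_sum[symmetric]) (intro summable_mult heat_summ T)
  also have "\<dots> = (\<Sum>k. poi_pmf T k * (\<Sum>z\<in>UNIV. \<nu> z * mpow P k z y))"
    by (simp add: sum_distrib_left mult_ac)
  finally show ?thesis .
qed

lemma tv_decomp:
  fixes w b :: "'x \<Rightarrow> real" and R m :: real
  assumes wnn: "\<And>y. 0 \<le> w y" and wsum: "(\<Sum>y\<in>UNIV. w y) = 1"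
    and bnn: "\<And>y. y \<in> G \<Longrightarrow> 0 \<le> b y" and bw: "\<And>y. y \<in> G \<Longrightarrow> b y \<le> w y"
    and mdef: "m = (\<Sum>y\<in>G. b y)" and m0: "0 < m"
    and PhiR: "Phi b \<le> R"
  shows "tv_dist w (cond_unif \<Omega>) \<le> (1 - m) + sqrt (R / (2 * m)) + real (card (\<Omega> - G)) / real (card \<Omega>)"
proof -
  define n where "n = real (card G)"
  define N where "N = real (card \<Omega>)"
  define p where "p y = (if y \<in> G then b y / m else 0)" for y
  define u where "u y = (if y \<in> G then 1 / n else 0)" for y
  define \<pi> where "\<pi> = cond_unif \<Omega>"
  have n: "0 < n" using n_pos by (simp add: n_def)
  have nN: "n \<le> N" using GO by (simp add: n_def N_def card_mono)
  have N: "0 < N" using n nN by simp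
  have m1: "m \<le> 1"
  proof -
    have "m \<le> (\<Sum>y\<in>G. w y)" unfolding mdef by (intro sum_mono bw)
    also have "\<dots> \<le> (\<Sum>y\<in>UNIV. w y)" by (intro sum_mono2) (auto simp: wnn)
    finally show ?thesis using wsum by simp
  qed
  have tri: "\<bar>w y - \<pi> y\<bar> \<le> \<bar>w y - p y\<bar> + \<bar>p y - u y\<bar> + \<bar>u y - \<pi> y\<bar>" for y
    by linarith
  have i: "(\<Sum>y\<in>UNIV. \<bar>w y - p y\<bar>) \<le> 2 * (1 - m)"
  proof -
    have "(\<Sum>y\<in>UNIV. \<bar>w y - p y\<bar>) = (\<Sum>y\<in>G. \<bar>w y - b y / m\<bar>) + (\<Sum>y\<in>-G. w y)"
      using sum_split[of "\<lambda>y. \<bar>w y - p y\<bar>" G] wnn by (simp add: p_def)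
    also have "(\<Sum>y\<in>G. \<bar>w y - b y / m\<bar>) \<le> (\<Sum>y\<in>G. (w y - b y) + (b y / m - b y))"
    proof (rule sum_mono)
      fix y assume y: "y \<in> G"
      have "b y * 1 \<le> b y * (1 / m)" using bnn[OF y] m0 m1 by (intro mult_left_mono) (auto simp: field_simps)
      then have "b y \<le> b y / m" by simp
      then show "\<bar>w y - b y / m\<bar> \<le> (w y - b y) + (b y / m - b y)" using bw[OF y] by linarith
    qed
    also have "(\<Sum>y\<in>G. (w y - b y) + (b y / m - b y)) = (\<Sum>y\<in>G. w y) - m + (m / m - m)"
      by (simp add: sum.distrib sum_subtractf sum_divide_distrib[symmetric] mdef sum_distrib_left[symmetric])
    also have "m / m = 1" using m0 by simp
    finally have "(\<Sum>y\<in>UNIV. \<bar>w y - p y\<bar>) \<le> ((\<Sum>y\<in>G. w y) + (\<Sum>y\<in>-G. w y)) - 2 * m + 1" by simp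
    also have "(\<Sum>y\<in>G. w y) + (\<Sum>y\<in>-G. w y) = 1" using sum_split[of w G] wsum by simp
    finally show ?thesis by simp
  qed
  have ii: "(\<Sum>y\<in>UNIV. \<bar>p y - u y\<bar>) \<le> sqrt (2 * Phi b / m)"
  proof -
    have "(\<Sum>y\<in>UNIV. \<bar>p y - u y\<bar>) = (\<Sum>y\<in>UNIV. if y \<in> G then \<bar>b y / m - 1 / n\<bar> else 0)"
      by (intro sum.cong refl) (simp add: p_def u_def)
    also have "\<dots> = (\<Sum>y\<in>G. \<bar>b y / m - 1 / n\<bar>)" by (rule sumG)
    finally have e1: "(\<Sum>y\<in>UNIV. \<bar>p y - u y\<bar>) = (\<Sum>y\<in>G. \<bar>b y / m - 1 / n\<bar>)" .
    have ps: "(\<Sum>y\<in>G. b y / m) = 1" using m0 by (simp add: sum_divide_distrib[symmetric] mdef)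
    have "(\<Sum>y\<in>G. \<bar>b y / m - 1 / real (card G)\<bar>)^2
        \<le> 2 * (\<Sum>y\<in>G. b y / m * ln (real (card G) * (b y / m)))"
      using Gne m0 bnn ps by (intro pinsker_unif) auto
    also have "(\<Sum>y\<in>G. b y / m * ln (real (card G) * (b y / m))) = Phi b / m"
    proof -
      have "Phi b = (\<Sum>y\<in>G. b y * ln (real (card G) * b y / m))"
        using Phi_alt[OF bnn] m0 by (simp add: mdef)
      then show ?thesis by (simp add: sum_divide_distrib)
    qed
    finally have "(\<Sum>y\<in>G. \<bar>b y / m - 1 / n\<bar>)^2 \<le> 2 * Phi b / m" by (simp add: n_def)
    then show ?thesis unfolding e1 by (rule real_le_rsqrt)
  qed
  have iii: "(\<Sum>y\<in>UNIV. \<bar>u y - \<pi> y\<bar>) = 2 * (real (card (\<Omega> - G)) / N)"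
  proof -
    have "(\<Sum>y\<in>UNIV. \<bar>u y - \<pi> y\<bar>) = (\<Sum>y\<in>G. \<bar>u y - \<pi> y\<bar>) + (\<Sum>y\<in>-G. \<bar>u y - \<pi> y\<bar>)"
      by (rule sum_split)
    also have "(\<Sum>y\<in>G. \<bar>u y - \<pi> y\<bar>) = (\<Sum>y\<in>G. 1 / n - 1 / N)"
    proof (intro sum.cong refl)
      fix y assume y: "y \<in> G"
      have "1 / N \<le> 1 / n" using n nN by (simp add: frac_le)
      then show "\<bar>u y - \<pi> y\<bar> = 1 / n - 1 / N"
        using y GO by (auto simp: u_def \<pi>_def cond_unif_def N_def)
    qed
    also have "\<dots> = 1 - n / N" using n by (simp add: n_def[symmetric] right_diff_distrib)
    also have "(\<Sum>y\<in>-G. \<bar>u y - \<pi> y\<bar>) = (\<Sum>y\<in>-G. if y \<in> \<Omega> then 1 / N else 0)"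
      by (intro sum.cong refl) (auto simp: u_def \<pi>_def cond_unif_def N_def)
    also have "\<dots> = real (card (-G \<inter> \<Omega>)) / N"
      by (simp add: sum.If_cases Int_def)
    also have "-G \<inter> \<Omega> = \<Omega> - G" by auto
    finally have e: "(\<Sum>y\<in>UNIV. \<bar>u y - \<pi> y\<bar>) = 1 - n / N + real (card (\<Omega> - G)) / N" .
    have c: "real (card (\<Omega> - G)) = N - n"
      using GO by (simp add: card_Diff_subset card_mono N_def n_def of_nat_diff)
    show ?thesis unfolding e using N by (simp add: c field_simps)
  qed
  have "tv_dist w (cond_unif \<Omega>) = (1/2) * (\<Sum>y\<in>UNIV. \<bar>w y - \<pi> y\<bar>)"
    by (simp add: tv_dist_def \<pi>_def)
  also have "\<dots> \<le> (1/2) * ((\<Sum>y\<in>UNIV. \<bar>w y - p y\<bar>) + (\<Sum>y\<in>UNIV. \<bar>p y - u y\<bar>) + (\<Sum>y\<in>UNIV. \<bar>u y - \<pi> y\<bar>))"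
    using tri by (simp add: sum.distrib[symmetric] sum_mono)
  also have "\<dots> \<le> (1/2) * (2 * (1 - m) + sqrt (2 * Phi b / m) + 2 * (real (card (\<Omega> - G)) / N))"
    using i ii iii by simp
  also have "sqrt (2 * Phi b / m) = 2 * sqrt (Phi b / (2 * m))"
  proof -
    have e: "2 * Phi b / m = 2^2 * (Phi b / (2 * m))" using m0 by (simp add: field_simps power2_eq_square)
    have "sqrt (2 * Phi b / m) = sqrt (2^2) * sqrt (Phi b / (2 * m))" unfolding e by (rule real_sqrt_mult)
    then show ?thesis by simp
  qed
  also have "sqrt (Phi b / (2 * m)) \<le> sqrt (R / (2 * m))"
    using PhiR m0 by (intro real_sqrt_le_mono divide_right_mono) auto
  finally show ?thesis by (simp add: N_def)
qed

end

lemma poi_parts: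
  assumes T: "0 \<le> T"
  shows "summable (\<lambda>k. if k \<le> L then poi_pmf T k else 0)"
    and "summable (\<lambda>k. if L < k then poi_pmf T k else 0)"
    and "(\<Sum>k. if k \<le> L then poi_pmf T k else 0) = 1 - poi_gt T L"
    and "0 \<le> poi_gt T L"
proof -
  show s1: "summable (\<lambda>k. if k \<le> L then poi_pmf T k else 0)"
    by (rule summable_comparison_test[OF _ poi_summable]) (auto simp: poi_nn[OF T])
  show s2: "summable (\<lambda>k. if L < k then poi_pmf T k else 0)"
    by (rule summable_comparison_test[OF _ poi_summable]) (auto simp: poi_nn[OF T])
  have "(\<lambda>k. poi_pmf T k) = (\<lambda>k. (if k \<le> L then poi_pmf T k else 0) + (if L < k then poi_pmf T k else 0))"
    by auto
  then have "1 = (\<Sum>k. (if k \<le> L then poi_pmf T k else 0) + (if L < k then poi_pmf T k else 0))"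
    using poi_suminf[of T] by simp
  also have "\<dots> = (\<Sum>k. if k \<le> L then poi_pmf T k else 0) + poi_gt T L"
    unfolding poi_gt_def by (rule suminf_add[symmetric, OF s1 s2])
  finally show "(\<Sum>k. if k \<le> L then poi_pmf T k else 0) = 1 - poi_gt T L" by simp
  show "0 \<le> poi_gt T L"
    unfolding poi_gt_def by (intro suminf_nonneg s2) (auto simp: poi_nn[OF T])
qed

context setting begin

lemma card_Omega_pos: "0 < card \<Omega>"
  using Gne GO by (auto simp: card_gt_0_iff)

lemma Phi_prob_bound:
  assumes nn: "\<And>z. 0 \<le> \<nu> z" and s: "(\<Sum>z\<in>G. \<nu> z) \<le> 1"
  shows "Phi \<nu> \<le> ln (real (card \<Omega>))"
proof -
  define m0 where "m0 = (\<Sum>z\<in>G. \<nu> z)"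
  define n where "n = real (card G)"
  have "(\<Sum>y\<in>G. \<nu> y * ln (\<nu> y)) \<le> (\<Sum>y\<in>G. \<nu> y * ln m0)"
  proof (rule sum_mono)
    fix y assume y: "y \<in> G"
    show "\<nu> y * ln (\<nu> y) \<le> \<nu> y * ln m0"
    proof (cases "\<nu> y = 0")
      case True then show ?thesis by simp
    next
      case False
      then have p: "0 < \<nu> y" using nn[of y] by simp
      have "\<nu> y \<le> m0" unfolding m0_def using y nn by (intro member_le_sum) auto
      then have "ln (\<nu> y) \<le> ln m0" using p by simp
      then show ?thesis using p by (intro mult_left_mono) auto
    qed
  qed
  also have "\<dots> = m0 * ln m0" by (simp add: m0_def sum_distrib_right)
  finally have "Phi \<nu> \<le> m0 * ln n" by (simp add: Phi_def m0_def[symmetric] n_def)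
  also have "\<dots> \<le> 1 * ln n"
    using s n_pos by (intro mult_right_mono) (auto simp: m0_def n_def)
  also have "\<dots> \<le> ln (real (card \<Omega>))"
    using n_pos GO card_Omega_pos by (simp add: n_def card_mono)
  finally show ?thesis .
qed

lemma part1:
  assumes x: "x \<in> \<Omega>" and T: "0 \<le> T" and eta: "0 \<le> \<eta>" and ex: "exit_prob P G x s L \<le> \<eta>"
  shows "tv_dist (\<lambda>y. \<Sum>z\<in>UNIV. mpow P s x z * heat P T z y) (cond_unif \<Omega>)
     \<le> 2 * (\<eta> + poi_gt T L) + sqrt ((exp (- T / A) * ln (real (card \<Omega>)) + A * rho) / 2)
        + real (card (\<Omega> - G)) / real (card \<Omega>)"
proof -
  define \<nu> where "\<nu> z = mpow P s x z" for z
  define w where "w y = (\<Sum>z\<in>UNIV. \<nu> z * heat P T z y)" for y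
  define \<zeta> where "\<zeta> = poi_gt T L"
  define R where "R = exp (- T / A) * ln (real (card \<Omega>)) + A * rho"
  define piGc where "piGc = real (card (\<Omega> - G)) / real (card \<Omega>)"
  define b where "b = BB \<nu> T"
  define m where "m = (\<Sum>y\<in>G. b y)"
  have \<nu>nn: "\<And>z. 0 \<le> \<nu> z" by (simp add: \<nu>_def mpow_nn)
  have \<nu>sum: "(\<Sum>z\<in>UNIV. \<nu> z) = 1" by (simp add: \<nu>_def mpow_rs1)
  have \<nu>G: "(\<Sum>z\<in>G. \<nu> z) \<le> 1"
    using \<nu>sum by (metis \<nu>nn sum_mono2 finite subset_UNIV)
  have wnn: "\<And>y. 0 \<le> w y" unfolding w_def by (intro sum_nonneg mult_nonneg_nonneg \<nu>nn heat_nn T)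
  have wsum: "(\<Sum>y\<in>UNIV. w y) = 1"
  proof -
    have "(\<Sum>y\<in>UNIV. w y) = (\<Sum>z\<in>UNIV. \<nu> z * (\<Sum>y\<in>UNIV. heat P T z y))"
      unfolding w_def by (subst sum.swap) (simp add: sum_distrib_left)
    then show ?thesis by (simp add: heat_rows[OF T] \<nu>sum)
  qed
  have R0: "0 \<le> R" unfolding R_def
    using card_Omega_pos Apos rho_nn by (intro add_nonneg_nonneg mult_nonneg_nonneg) auto
  have \<zeta>0: "0 \<le> \<zeta>" unfolding \<zeta>_def by (rule poi_parts(4)[OF T])
  have piGc0: "0 \<le> piGc" by (simp add: piGc_def)
  have tvw1: "tv_dist w (cond_unif \<Omega>) \<le> 1"
    using card_Omega_pos by (intro tv_le1 wnn cond_unif_nn wsum cond_unif_sum) auto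
  have weq: "(\<lambda>y. \<Sum>z\<in>UNIV. mpow P s x z * heat P T z y) = w"
    by (rule ext) (simp add: w_def \<nu>_def)
  have main: "tv_dist w (cond_unif \<Omega>) \<le> 2 * (\<eta> + \<zeta>) + sqrt (R / 2) + piGc"
  proof (cases "1 \<le> 2 * (\<eta> + \<zeta>) + sqrt (R / 2) + piGc")
    case True then show ?thesis using tvw1 by linarith
  next
    case False
    then have small: "2 * (\<eta> + \<zeta>) + sqrt (R / 2) < 1" using piGc0 by linarith
    have sq0: "0 \<le> sqrt (R / 2)" using R0 by simp
    have bnn: "\<And>y. y \<in> G \<Longrightarrow> 0 \<le> b y"
    proof -
      fix y assume y: "y \<in> G"
      have "\<nu> y \<le> SS \<nu> T y" using \<nu>nn y T by (intro SS_ge) auto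
      then show "0 \<le> b y" using \<nu>nn[of y] by (simp add: b_def BB_def)
    qed
    have bw: "\<And>y. y \<in> G \<Longrightarrow> b y \<le> w y"
    proof -
      fix y assume y: "y \<in> G"
      have "b y = (\<Sum>k. poi_pmf T k * rr \<nu> k y)" by (simp add: b_def BB_poi)
      also have "\<dots> \<le> (\<Sum>k. poi_pmf T k * (\<Sum>z\<in>UNIV. \<nu> z * mpow P k z y))"
      proof (rule suminf_le)
        show "summable (\<lambda>k. poi_pmf T k * rr \<nu> k y)" by (rule poi_summable_bdd[OF T rr_bound])
        show "summable (\<lambda>k. poi_pmf T k * (\<Sum>z\<in>UNIV. \<nu> z * mpow P k z y))"
        proof (rule poi_summable_bdd[OF T, where C=1])
          fix k
          have "0 \<le> (\<Sum>z\<in>UNIV. \<nu> z * mpow P k z y)" by (intro sum_nonneg mult_nonneg_nonneg \<nu>nn mpow_nn)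
          moreover have "(\<Sum>z\<in>UNIV. \<nu> z * mpow P k z y) \<le> (\<Sum>z\<in>UNIV. \<nu> z)"
            by (intro sum_mono) (simp add: \<nu>nn mpow_le1 mult_left_le)
          ultimately show "\<bar>\<Sum>z\<in>UNIV. \<nu> z * mpow P k z y\<bar> \<le> 1" using \<nu>sum by simp
        qed
        fix k
        have "rr \<nu> k y \<le> (\<Sum>z\<in>G. \<nu> z * mpow P k z y)"
          unfolding rr_def by (intro sum_mono mult_left_mono mpowQ_le \<nu>nn)
        also have "\<dots> \<le> (\<Sum>z\<in>UNIV. \<nu> z * mpow P k z y)"
          by (intro sum_mono2) (auto intro: mult_nonneg_nonneg \<nu>nn mpow_nn)
        finally show "poi_pmf T k * rr \<nu> k y \<le> poi_pmf T k * (\<Sum>z\<in>UNIV. \<nu> z * mpow P k z y)"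
          by (intro mult_left_mono poi_nn T)
      qed
      also have "\<dots> = w y" unfolding w_def by (rule heat_row[OF T, symmetric])
      finally show "b y \<le> w y" .
    qed
    have m1: "m \<le> 1"
    proof -
      have "m \<le> (\<Sum>y\<in>G. w y)" unfolding m_def by (intro sum_mono bw)
      also have "\<dots> \<le> (\<Sum>y\<in>UNIV. w y)" by (intro sum_mono2) (auto simp: wnn)
      finally show ?thesis using wsum by simp
    qed
    define X where "X k = (\<Sum>z\<in>G. \<nu> z * stay_in P G k z)" for k
    have Xnn: "0 \<le> X k" for k unfolding X_def by (intro sum_nonneg mult_nonneg_nonneg \<nu>nn stay_nn)
    have X1: "X k \<le> 1" for k
    proof -
      have "X k \<le> (\<Sum>z\<in>G. \<nu> z)" unfolding X_def
        by (intro sum_mono) (simp add: \<nu>nn stay_le1 mult_left_le)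
      then show ?thesis using \<nu>G by simp
    qed
    have XL: "1 - \<eta> \<le> X L"
    proof -
      have "(\<Sum>z\<in>UNIV. \<nu> z * stay_in P G L z) = X L + (\<Sum>z\<in>-G. \<nu> z * stay_in P G L z)"
        unfolding X_def by (rule sum_split)
      moreover have "(\<Sum>z\<in>-G. \<nu> z * stay_in P G L z) = 0" by (intro sum.neutral) (auto simp: stay_out)
      moreover have "exit_prob P G x s L = 1 - (\<Sum>z\<in>UNIV. \<nu> z * stay_in P G L z)"
        by (simp add: exit_prob_def \<nu>_def)
      ultimately show ?thesis using ex by simp
    qed
    have Xmono: "k \<le> L \<Longrightarrow> X L \<le> X k" for k
      unfolding X_def by (intro sum_mono mult_left_mono stay_mono \<nu>nn)
    have mX: "m = (\<Sum>k. poi_pmf T k * X k)"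
    proof -
      have "m = (\<Sum>y\<in>G. \<Sum>k. poi_pmf T k * rr \<nu> k y)" by (simp add: m_def b_def BB_poi)
      also have "\<dots> = (\<Sum>k. \<Sum>y\<in>G. poi_pmf T k * rr \<nu> k y)"
        by (rule suminf_sum[symmetric]) (rule poi_summable_bdd[OF T rr_bound])
      also have "\<dots> = (\<Sum>k. poi_pmf T k * X k)"
        by (simp add: sum_distrib_left[symmetric] rr_mass X_def)
      finally show ?thesis .
    qed
    have "(\<Sum>k. (if k \<le> L then poi_pmf T k else 0) * (1 - \<eta>)) \<le> (\<Sum>k. poi_pmf T k * X k)"
    proof (rule suminf_le)
      show "summable (\<lambda>k. (if k \<le> L then poi_pmf T k else 0) * (1 - \<eta>))"
        by (rule summable_mult2[OF poi_parts(1)[OF T]])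
      show "summable (\<lambda>k. poi_pmf T k * X k)"
        by (rule poi_summable_bdd[OF T, where C=1]) (simp add: Xnn X1)
      fix k
      show "(if k \<le> L then poi_pmf T k else 0) * (1 - \<eta>) \<le> poi_pmf T k * X k"
      proof (cases "k \<le> L")
        case True
        then have "1 - \<eta> \<le> X k" using XL Xmono[OF True] by linarith
        then show ?thesis using True by (simp add: mult_left_mono poi_nn[OF T])
      next
        case False
        then show ?thesis by (simp add: poi_nn[OF T] Xnn)
      qed
    qed
    also have "(\<Sum>k. (if k \<le> L then poi_pmf T k else 0) * (1 - \<eta>)) = (1 - \<zeta>) * (1 - \<eta>)"
      by (simp add: suminf_mult2[OF poi_parts(1)[OF T], symmetric] poi_parts(3)[OF T] \<zeta>_def)
    finally have "(1 - \<zeta>) * (1 - \<eta>) \<le> m" using mX by simp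
    moreover have "0 \<le> \<zeta> * \<eta>" using \<zeta>0 eta by simp
    ultimately have mge: "1 - (\<eta> + \<zeta>) \<le> m" by (simp add: algebra_simps)
    have "2 * (\<eta> + \<zeta>) < 1" using small sq0 by linarith
    then have "\<eta> + \<zeta> < 1/2" by simp
    then have mpos: "0 < m" using mge by linarith
    have PhiR: "Phi b \<le> R"
    proof -
      have "Phi b \<le> exp (- T / A) * Phi \<nu> + A * rho * (\<Sum>y\<in>G. \<nu> y)"
        unfolding b_def using \<nu>nn T by (intro gronwall) auto
      also have "\<dots> \<le> exp (- T / A) * ln (real (card \<Omega>)) + A * rho * 1"
        using Phi_prob_bound[OF \<nu>nn \<nu>G] \<nu>G Apos rho_nn
        by (intro add_mono mult_left_mono) auto
      finally show ?thesis by (simp add: R_def)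
    qed
    have "tv_dist w (cond_unif \<Omega>) \<le> (1 - m) + sqrt (R / (2 * m)) + piGc"
      unfolding piGc_def by (rule tv_decomp[OF wnn wsum bnn bw m_def mpos PhiR])
    also have "(1 - m) + sqrt (R / (2 * m)) \<le> 2 * (\<eta> + \<zeta>) + sqrt (R / 2)"
      using eta \<zeta>0 by (intro final_ineq[OF R0 _ mge m1 small]) auto
    finally show ?thesis by simp
  qed
  show ?thesis using main unfolding weq by (simp add: \<zeta>_def R_def piGc_def)
qed

end

lemma cr_stoch:
  fixes K :: "'n::finite \<Rightarrow> ('n \<Rightarrow> 'a::finite) \<Rightarrow> 'a \<Rightarrow> 'a \<Rightarrow> real"
  assumes K: "cr_data K"
  shows "stoch (cr_kernel K)"
proof
  have Knn: "\<And>i x a b. 0 \<le> K i x a b" and Ks: "\<And>i x a. (\<Sum>b\<in>UNIV. K i x a b) = 1"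
    using K by (auto simp: cr_data_def)
  show "0 \<le> cr_kernel K x y" for x y
    unfolding cr_kernel_def by (intro mult_nonneg_nonneg sum_nonneg) (auto simp: Knn)
  show "(\<Sum>y\<in>UNIV. cr_kernel K x y) = 1" for x
  proof -
    define F where "F y i u = K i x (x i) u * (if y = x(i := u) then 1 else 0)" for y i u
    have "(\<Sum>y\<in>UNIV. cr_kernel K x y) = (1 / real CARD('n)) * (\<Sum>y\<in>UNIV. \<Sum>i\<in>UNIV. \<Sum>u\<in>UNIV. F y i u)"
      by (simp add: cr_kernel_def sum_distrib_left F_def)
    also have "(\<Sum>y\<in>UNIV. \<Sum>i\<in>UNIV. \<Sum>u\<in>UNIV. F y i u) = (\<Sum>i\<in>UNIV. \<Sum>y\<in>UNIV. \<Sum>u\<in>UNIV. F y i u)"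
      by (rule sum.swap)
    also have "\<dots> = (\<Sum>i\<in>UNIV. \<Sum>u\<in>UNIV. \<Sum>y\<in>UNIV. F y i u)"
      by (intro sum.cong refl sum.swap)
    also have "\<dots> = (\<Sum>i\<in>UNIV. \<Sum>u\<in>UNIV. K i x (x i) u)"
    proof (intro sum.cong refl)
      fix i u
      have "(\<Sum>y\<in>UNIV. F y i u) = (\<Sum>y\<in>UNIV. if y = x(i := u) then K i x (x i) u else 0)"
        by (intro sum.cong refl) (simp add: F_def)
      then show "(\<Sum>y\<in>UNIV. F y i u) = K i x (x i) u" by simp
    qed
    also have "\<dots> = (\<Sum>i\<in>(UNIV::'n set). (1::real))" by (simp add: Ks)
    finally show ?thesis by simp
  qed
qed

context setting begin

lemma part2:
  assumes ts: "0 \<le> tstar" and T: "0 \<le> T" and bnd0: "0 \<le> bound"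
    and H: "\<And>x s. x \<in> \<Omega> \<Longrightarrow> tstar \<le> real s \<Longrightarrow>
        tv_dist (\<lambda>y. \<Sum>z\<in>UNIV. mpow P s x z * heat P T z y) (cond_unif \<Omega>) \<le> bound"
    and small: "bound + poi_lt (2 * tstar) tstar \<le> 1/4"
  shows "tmix_cont P \<Omega> \<le> 2 * tstar + T"
proof -
  define a where "a = 2 * tstar"
  have a: "0 \<le> a" using ts by (simp add: a_def)
  define \<pi> where "\<pi> = cond_unif \<Omega>"
  have \<pi>nn: "0 \<le> \<pi> y" for y by (simp add: \<pi>_def cond_unif_nn)
  have \<pi>sum: "(\<Sum>y\<in>UNIV. \<pi> y) = 1" using card_Omega_pos by (simp add: \<pi>_def cond_unif_sum card_gt_0_iff)
  let ?S = "{t. t \<ge> 0 \<and> (\<forall>x\<in>\<Omega>. tv_dist (heat P t x) (cond_unif \<Omega>) \<le> 1/4)}"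
  have mem: "a + T \<in> ?S"
  proof (rule CollectI, intro conjI ballI)
    show "0 \<le> a + T" using a T by simp
    fix x assume x: "x \<in> \<Omega>"
    define W where "W j y = (\<Sum>z\<in>UNIV. mpow P j x z * heat P T z y)" for j y
    have Wnn: "0 \<le> W j y" for j y
      unfolding W_def by (intro sum_nonneg mult_nonneg_nonneg mpow_nn heat_nn T)
    have Wsum: "(\<Sum>y\<in>UNIV. W j y) = 1" for j
    proof -
      have "(\<Sum>y\<in>UNIV. W j y) = (\<Sum>z\<in>UNIV. mpow P j x z * (\<Sum>y\<in>UNIV. heat P T z y))"
        unfolding W_def by (subst sum.swap) (simp add: sum_distrib_left)
      then show ?thesis by (simp add: heat_rows[OF T] mpow_rs1)
    qed
    have W1: "W j y \<le> 1" for j y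
    proof -
      have "W j y \<le> (\<Sum>y\<in>UNIV. W j y)" by (rule member_le_sum) (auto simp: Wnn)
      then show ?thesis using Wsum by simp
    qed
    have \<pi>1: "\<pi> y \<le> 1" for y
    proof -
      have "\<pi> y \<le> (\<Sum>y\<in>UNIV. \<pi> y)" by (rule member_le_sum) (auto simp: \<pi>nn)
      then show ?thesis using \<pi>sum by simp
    qed
    have Wpi: "\<bar>W j y - \<pi> y\<bar> \<le> 1" for j y
      using Wnn[of j y] W1[of j y] \<pi>nn[of y] \<pi>1[of y] by (simp add: abs_le_iff)
    have tvj: "tv_dist (W j) \<pi> \<le> (if tstar \<le> real j then bound else 1)" for j
    proof (cases "tstar \<le> real j")
      case True
      have "W j = (\<lambda>y. \<Sum>z\<in>UNIV. mpow P j x z * heat P T z y)" by (rule ext) (simp add: W_def)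
      then show ?thesis using H[OF x True] True by (simp add: \<pi>_def)
    next
      case False
      then show ?thesis using Wnn Wsum \<pi>nn \<pi>sum by (simp add: tv_le1)
    qed
    have tvj0: "0 \<le> tv_dist (W j) \<pi>" for j by (simp add: tv_dist_def sum_nonneg)
    have tvj1: "tv_dist (W j) \<pi> \<le> 1" for j using Wnn Wsum \<pi>nn \<pi>sum by (simp add: tv_le1)
    have heq: "heat P (a + T) x y = (\<Sum>j. poi_pmf a j * W j y)" for y
    proof -
      have "heat P (a + T) x y = (\<Sum>z\<in>UNIV. heat P a x z * heat P T z y)"
        by (rule heat_semigroup[OF a T])
      also have "\<dots> = (\<Sum>z\<in>UNIV. \<Sum>j. poi_pmf a j * mpow P j x z * heat P T z y)"
      proof (intro sum.cong refl)
        fix z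
        show "heat P a x z * heat P T z y = (\<Sum>j. poi_pmf a j * mpow P j x z * heat P T z y)"
          unfolding heat_eq[of P a x z] by (rule suminf_mult2[OF heat_summ[OF a]])
      qed
      also have "\<dots> = (\<Sum>j. \<Sum>z\<in>UNIV. poi_pmf a j * mpow P j x z * heat P T z y)"
        by (rule suminf_sum[symmetric]) (intro summable_mult2 heat_summ a)
      also have "\<dots> = (\<Sum>j. poi_pmf a j * W j y)"
        by (simp add: W_def sum_distrib_left mult_ac)
      finally show ?thesis .
    qed
    have sW: "summable (\<lambda>j. poi_pmf a j * (W j y - \<pi> y))" for y
      by (rule poi_summable_bdd[OF a, where C=1]) (simp add: Wpi)
    have sWa: "summable (\<lambda>j. poi_pmf a j * \<bar>W j y - \<pi> y\<bar>)" for y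
      by (rule poi_summable_bdd[OF a, where C=1]) (simp add: Wpi)
    have pt: "\<bar>heat P (a + T) x y - \<pi> y\<bar> \<le> (\<Sum>j. poi_pmf a j * \<bar>W j y - \<pi> y\<bar>)" for y
    proof -
      have "heat P (a + T) x y - \<pi> y = (\<Sum>j. poi_pmf a j * W j y) - (\<Sum>j. poi_pmf a j * \<pi> y)"
        by (simp add: heq suminf_mult2[OF poi_summable, symmetric] poi_suminf)
      also have "\<dots> = (\<Sum>j. poi_pmf a j * (W j y - \<pi> y))"
        by (subst suminf_diff[OF poi_summable_bdd[OF a, where C=1] summable_mult2[OF poi_summable]])
          (auto simp: right_diff_distrib abs_of_nonneg Wnn W1)
      finally have e: "heat P (a + T) x y - \<pi> y = (\<Sum>j. poi_pmf a j * (W j y - \<pi> y))" .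
      have "\<bar>\<Sum>j. poi_pmf a j * (W j y - \<pi> y)\<bar> \<le> (\<Sum>j. \<bar>poi_pmf a j * (W j y - \<pi> y)\<bar>)"
        by (rule summable_rabs) (simp add: abs_mult abs_of_nonneg poi_nn[OF a] sWa)
      also have "\<dots> = (\<Sum>j. poi_pmf a j * \<bar>W j y - \<pi> y\<bar>)"
        by (simp add: abs_mult abs_of_nonneg poi_nn[OF a])
      finally show ?thesis unfolding e .
    qed
    have "tv_dist (heat P (a + T) x) (cond_unif \<Omega>) = (1/2) * (\<Sum>y\<in>UNIV. \<bar>heat P (a + T) x y - \<pi> y\<bar>)"
      by (simp add: tv_dist_def \<pi>_def)
    also have "\<dots> \<le> (1/2) * (\<Sum>y\<in>UNIV. \<Sum>j. poi_pmf a j * \<bar>W j y - \<pi> y\<bar>)"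
      by (intro mult_left_mono sum_mono pt) auto
    also have "(\<Sum>y\<in>UNIV. \<Sum>j. poi_pmf a j * \<bar>W j y - \<pi> y\<bar>) = (\<Sum>j. \<Sum>y\<in>UNIV. poi_pmf a j * \<bar>W j y - \<pi> y\<bar>)"
      by (rule suminf_sum[symmetric]) (rule sWa)
    also have "(1/2) * \<dots> = (\<Sum>j. poi_pmf a j * tv_dist (W j) \<pi>)"
    proof -
      have "summable (\<lambda>j. \<Sum>y\<in>UNIV. poi_pmf a j * \<bar>W j y - \<pi> y\<bar>)" by (intro summable_sum sWa)
      then have "(1/2) * (\<Sum>j. \<Sum>y\<in>UNIV. poi_pmf a j * \<bar>W j y - \<pi> y\<bar>)
          = (\<Sum>j. (1/2) * (\<Sum>y\<in>UNIV. poi_pmf a j * \<bar>W j y - \<pi> y\<bar>))"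
        by (rule suminf_mult[symmetric])
      also have "\<dots> = (\<Sum>j. poi_pmf a j * tv_dist (W j) \<pi>)"
        by (simp add: tv_dist_def sum_distrib_left[symmetric] mult_ac)
      finally show ?thesis .
    qed
    also have "\<dots> \<le> (\<Sum>j. poi_pmf a j * bound + (if real j < tstar then poi_pmf a j else 0))"
    proof (rule suminf_le)
      show "summable (\<lambda>j. poi_pmf a j * tv_dist (W j) \<pi>)"
        by (rule poi_summable_bdd[OF a, where C=1]) (use tvj0 tvj1 in auto)
      have s2: "summable (\<lambda>j. if real j < tstar then poi_pmf a j else 0)"
        by (rule summable_comparison_test[OF _ poi_summable]) (auto simp: poi_nn[OF a])
      show "summable (\<lambda>j. poi_pmf a j * bound + (if real j < tstar then poi_pmf a j else 0))"
        by (intro summable_add summable_mult2 poi_summable s2)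
      fix j
      show "poi_pmf a j * tv_dist (W j) \<pi> \<le> poi_pmf a j * bound + (if real j < tstar then poi_pmf a j else 0)"
      proof (cases "tstar \<le> real j")
        case True
        then have "poi_pmf a j * tv_dist (W j) \<pi> \<le> poi_pmf a j * bound"
          using tvj[of j] by (intro mult_left_mono poi_nn a) auto
        then show ?thesis using True by simp
      next
        case False
        have "poi_pmf a j * tv_dist (W j) \<pi> \<le> poi_pmf a j * 1"
          using tvj1 by (intro mult_left_mono poi_nn a) auto
        moreover have "0 \<le> poi_pmf a j * bound" using bnd0 poi_nn[OF a] by simp
        ultimately show ?thesis using False by simp
      qed
    qed
    also have "\<dots> = bound + poi_lt (2 * tstar) tstar"
    proof -
      have s2: "summable (\<lambda>j. if real j < tstar then poi_pmf a j else 0)"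
        by (rule summable_comparison_test[OF _ poi_summable]) (auto simp: poi_nn[OF a])
      have "(\<Sum>j. poi_pmf a j * bound + (if real j < tstar then poi_pmf a j else 0))
          = (\<Sum>j. poi_pmf a j * bound) + (\<Sum>j. if real j < tstar then poi_pmf a j else 0)"
        by (rule suminf_add[symmetric, OF summable_mult2[OF poi_summable] s2])
      also have "(\<Sum>j. poi_pmf a j * bound) = bound"
        by (simp add: suminf_mult2[OF poi_summable, symmetric] poi_suminf)
      finally show ?thesis by (simp add: poi_lt_def a_def[symmetric])
    qed
    finally show "tv_dist (heat P (a + T) x) (cond_unif \<Omega>) \<le> 1/4" using small by simp
  qed
  have bdd: "bdd_below ?S" by (rule bdd_belowI[of _ 0]) auto
  have "Inf ?S \<le> a + T" by (rule cInf_lower[OF mem bdd])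
  then show ?thesis unfolding tmix_cont_def a_def by assumption
qed

end

theorem theorem2p7:
  fixes K :: "'n::finite \<Rightarrow> ('n \<Rightarrow> 'a::finite) \<Rightarrow> 'a \<Rightarrow> 'a \<Rightarrow> real"
    and \<Omega> G :: "('n \<Rightarrow> 'a) set"
    and A tstar \<eta> :: real and L :: nat
  defines "P \<equiv> cr_kernel K"
  assumes K: "cr_data K"
    and rev: "\<forall>x y. P x y = P y x"
    and \<Omega>ne: "\<Omega> \<noteq> {}"
    and inv: "\<forall>x\<in>\<Omega>. \<forall>y. y \<notin> \<Omega> \<longrightarrow> P x y = 0"
    and G: "G \<subseteq> \<Omega>" "G \<noteq> {}"
    and Apos: "A > 0"
    and LS: "\<forall>F :: ('n \<Rightarrow> 'a) \<Rightarrow> real. (\<forall>x. F x \<ge> 0) \<longrightarrow> (\<forall>x. x \<notin> G \<longrightarrow> F x = 0) \<longrightarrow>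
               Ent_unif (\<lambda>x. (F x)^2) \<le> A * dirichlet_unif P F"
    and tstar: "tstar \<ge> 0" and L: "L \<ge> 1" and eta: "\<eta> \<ge> 0"
    and exit: "\<forall>x\<in>\<Omega>. \<forall>s::nat. real s \<ge> tstar \<longrightarrow> exit_prob P G x s L \<le> \<eta>"
  shows "let tconf = 2 * A * ln (exp 1 + ln (real (card \<Omega>)));
             \<zeta> = poi_gt tconf L;
             piGc = real (card (\<Omega> - G)) / real (card \<Omega>);
             piG = real (card G) / real (card \<Omega>);
             R = exp (- tconf / A) * ln (real (card \<Omega>)) + A * piGc / piG;
             bound = 2 * (\<eta> + \<zeta>) + sqrt (R / 2) + piGc
         in (\<forall>x\<in>\<Omega>. \<forall>s::nat. real s \<ge> tstar \<longrightarrow>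
               tv_dist (\<lambda>y. \<Sum>z\<in>UNIV. mpow P s x z * heat P tconf z y) (cond_unif \<Omega>) \<le> bound)
          \<and> (bound + poi_lt (2 * tstar) tstar \<le> 1/4 \<longrightarrow> tmix_cont P \<Omega> \<le> 2 * tstar + tconf)"
proof -
  have st: "stoch P" unfolding P_def by (rule cr_stoch[OF K])
  have S: "setting P \<Omega> G A"
    by (intro setting.intro st setting_axioms.intro) (use rev inv G Apos LS in auto)
  interpret S: setting P \<Omega> G A by (rule S)
  define tconf where "tconf = 2 * A * ln (exp 1 + ln (real (card \<Omega>)))"
  define \<zeta> where "\<zeta> = poi_gt tconf L"
  define piGc where "piGc = real (card (\<Omega> - G)) / real (card \<Omega>)"
  define piG where "piG = real (card G) / real (card \<Omega>)"
  define R where "R = exp (- tconf / A) * ln (real (card \<Omega>)) + A * piGc / piG"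
  define bound where "bound = 2 * (\<eta> + \<zeta>) + sqrt (R / 2) + piGc"
  have card: "0 < card \<Omega>" by (rule S.card_Omega_pos)
  have lnO: "0 \<le> ln (real (card \<Omega>))" using card by simp
  have tc0: "0 \<le> tconf"
  proof -
    have "1 \<le> exp (1::real)" by simp
    then have "1 \<le> exp 1 + ln (real (card \<Omega>))" using lnO by linarith
    then have "0 \<le> ln (exp 1 + ln (real (card \<Omega>)))" by simp
    then show ?thesis using Apos by (simp add: tconf_def)
  qed
  have Req: "R = exp (- tconf / A) * ln (real (card \<Omega>)) + A * S.rho"
  proof -
    have "A * piGc / piG = A * S.rho"
      using card S.n_pos by (simp add: piGc_def piG_def S.rho_def field_simps)
    then show ?thesis by (simp add: R_def)
  qed
  have P1: "\<forall>x\<in>\<Omega>. \<forall>s::nat. real s \<ge> tstar \<longrightarrow>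
      tv_dist (\<lambda>y. \<Sum>z\<in>UNIV. mpow P s x z * heat P tconf z y) (cond_unif \<Omega>) \<le> bound"
  proof (intro ballI allI impI)
    fix x s assume x: "x \<in> \<Omega>" and s: "tstar \<le> real s"
    have ex: "exit_prob P G x s L \<le> \<eta>" using exit x s by auto
    show "tv_dist (\<lambda>y. \<Sum>z\<in>UNIV. mpow P s x z * heat P tconf z y) (cond_unif \<Omega>) \<le> bound"
      using S.part1[OF x tc0 eta ex] by (simp add: bound_def Req \<zeta>_def piGc_def)
  qed
  have b0: "0 \<le> bound"
  proof -
    have "0 \<le> \<zeta>" unfolding \<zeta>_def by (rule poi_parts(4)[OF tc0])
    moreover have "0 \<le> sqrt (R / 2)" using Req lnO Apos S.rho_nn by simp
    moreover have "0 \<le> piGc" by (simp add: piGc_def)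
    ultimately show ?thesis using eta by (simp add: bound_def)
  qed
  have P2: "bound + poi_lt (2 * tstar) tstar \<le> 1/4 \<longrightarrow> tmix_cont P \<Omega> \<le> 2 * tstar + tconf"
    using S.part2[OF tstar tc0 b0] P1 by auto
  show ?thesis
    unfolding Let_def tconf_def[symmetric] \<zeta>_def[symmetric] piGc_def[symmetric] piG_def[symmetric]
      R_def[symmetric] bound_def[symmetric]
    using P1 P2 by blast
qed

end
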